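(* Let $p$ be an odd prime and $A\in\mathbb{Z}$. (i) If $p\mid A^2+4$, then $p\equiv1\pmod4$, $A/2\equiv(-1)^k\left(\frac{p-1}{2}\right)!\pmod p$ for some $k\in\{0,1\}$, and $$T_p(1,-A,-1)\equiv\begin{cases}(-1)^{(p+7)/8}\left(\frac{p-1}{2}\right)!\pmod p&\text{if }p\equiv1\pmod8,\\ (-1)^{k+(p-5)/8}\pmod p&\text{if }p\equiv5\pmod8.\end{cases}$$ (ii) If $\left(\frac{A^2+4}{p}\right)=1$, then $$T_p(1,-A,-1)\equiv\begin{cases}-(A^2+4)^{(p-1)/4}\pmod p&\text{if }p\equiv1\pmod4,\\ -(A^2+4)^{(p+1)/4}u_{(p-1)/2}(A)/2\pmod p&\text{if }p\equiv3\pmod4.\end{cases}$$ (iii) If $\left(\frac{A^2+4}{p}\right)=-1$, then $$T_p(1,-A,-1)\equiv\begin{cases}(-A^2-4)^{(p-1)/4}\pmod p&\text{if }p\equiv1\pmod4,\\ (-A^2-4)^{(p+1)/4}u_{(p+1)/2}(A)/2\pmod p&\text{if }p\equiv3\pmod4.\end{cases}$$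
   Context: $\left(\frac{\cdot}{p}\right)$ denotes the Legendre symbol. For an odd prime $p$ and $a,b,c\in\mathbb{Z}$, $T_p(a,b,c)=\prod_{i,j=1,\ p\nmid ai^2+bij+cj^2}^{(p-1)/2}(ai^2+bij+cj^2)$. For $A\in\mathbb{Z}$ the Lucas sequence $u_n(A)$ is defined by $u_0(A)=0$, $u_1(A)=1$, $u_{n+1}(A)=Au_n(A)+u_{n-1}(A)$ for $n\ge1$. Division by $2$ is understood modulo $p$. *)

theory Defs
  imports "HOL-Number_Theory.Number_Theory"
begin

definition T :: "nat \<Rightarrow> int \<Rightarrow> int \<Rightarrow> int \<Rightarrow> int" where
  "T p a b c = (\<Prod>(i,j)\<in>{(i,j). i \<in> {1..(p-1) div 2} \<and> j \<in> {1..(p-1) div 2}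
        \<and> \<not> int p dvd (a * int i ^ 2 + b * int i * int j + c * int j ^ 2)}.
        (a * int i ^ 2 + b * int i * int j + c * int j ^ 2))"

fun lucas_u :: "int \<Rightarrow> nat \<Rightarrow> int" where
  "lucas_u A 0 = 0"
| "lucas_u A (Suc 0) = 1"
| "lucas_u A (Suc (Suc n)) = A * lucas_u A (Suc n) + lucas_u A n"

end

theory Submission
  imports Defs "HOL-Computational_Algebra.Polynomial"
begin

lemma prod_pairs_snd:
  fixes S :: "nat set" and \<phi> :: "nat \<Rightarrow> nat \<Rightarrow> bool" and f :: "nat \<Rightarrow> nat \<Rightarrow> 'a::comm_monoid_mult"
  assumes "finite S"
  shows "(\<Prod>(i,j)\<in>{(i,j). i \<in> S \<and> j \<in> S \<and> \<phi> i j}. f i j) = (\<Prod>j\<in>S. \<Prod>i\<in>{i\<in>S. \<phi> i j}. f i j)"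
proof -
  have e: "{(i,j). i \<in> S \<and> j \<in> S \<and> \<phi> i j} = (\<lambda>(j,i). (i,j)) ` (SIGMA j:S. {i\<in>S. \<phi> i j})"
    by (auto simp: image_def)
  have inj: "inj_on (\<lambda>(j,i). (i,j)) (SIGMA j:S. {i\<in>S. \<phi> i j})"
    by (auto simp: inj_on_def)
  have s: "(\<Prod>j\<in>S. \<Prod>i\<in>{i\<in>S. \<phi> i j}. f i j) = (\<Prod>(j,i)\<in>(SIGMA j:S. {i\<in>S. \<phi> i j}). f i j)"
    by (rule prod.Sigma) (use assms in auto)
  show ?thesis unfolding e s
    by (subst prod.reindex[OF inj]) (simp add: comp_def case_prod_beta)
qed

locale oddp = fixes p :: nat assumes pr: "prime p" and od: "odd p"
begin

definition "h = (p - 1) div 2"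
abbreviation "S \<equiv> {1..h}"

lemma p_ge3: "p \<ge> 3"
proof -
  have "p \<ge> 2" using prime_ge_2_nat[OF pr] .
  moreover have "p \<noteq> 2" using od by auto
  ultimately show ?thesis by linarith
qed

lemma p_eq: "p = 2*h + 1" using od p_ge3 unfolding h_def by presburger
lemma h_pos: "h \<ge> 1" using p_ge3 p_eq by linarith

lemma p_Suc: "p = Suc (p - 1)" using p_ge3 by simp

lemma pow_p: "(x::'a::monoid_mult) ^ p = x ^ (p-1) * x"
proof -
  have "x ^ Suc (p - 1) = x ^ (p-1) * x" by (rule power_Suc2)
  then show ?thesis using p_Suc by simp
qed

lemma int_fermat: "[a ^ p = a] (mod int p)" for a :: int
proof (cases "int p dvd a")
  case True
  have "a ^ p - a = a * (a^(p-1) - 1)" by (simp add: pow_p algebra_simps)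
  then have "int p dvd a ^ p - a" using True by simp
  then show ?thesis by (simp add: cong_iff_dvd_diff)
next
  case False
  define n where "n = nat (a mod int p)"
  have an: "[a = int n] (mod int p)" unfolding n_def cong_def using p_ge3 by simp
  have "\<not> p dvd n"
  proof
    assume "p dvd n"
    then have "int p dvd int n" by simp
    then have "int p dvd a" using cong_dvd_iff[OF an] by simp
    then show False using False by simp
  qed
  then have "[n ^ (p-1) = 1] (mod p)" using fermat_theorem[OF pr] by blast
  then have "[int n ^ (p-1) = 1] (mod int p)"
    using cong_int_iff[of "n ^ (p-1)" 1 p] by simp
  then have "[int n ^ (p-1) * int n = 1 * int n] (mod int p)" by (rule cong_mult) simp
  then have "[int n ^ p = int n] (mod int p)" by (simp add: pow_p)
  moreover have "[a ^ p = int n ^ p] (mod int p)" using an by (rule cong_pow)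
  ultimately show ?thesis using an cong_sym cong_trans by meson
qed

lemma int_fermat1: "\<not> int p dvd a \<Longrightarrow> [a ^ (p-1) = 1] (mod int p)" for a :: int
proof -
  assume na: "\<not> int p dvd a"
  have "[a ^ (p-1) * a = 1 * a] (mod int p)"
    using int_fermat[of a] by (simp add: pow_p)
  moreover have "coprime a (int p)" using na prime_imp_coprime[of "int p" a] pr
    by (simp add: coprime_commute)
  ultimately show ?thesis using cong_mult_rcancel by blast
qed

lemma prime_int: "prime (int p)" using pr by simp

lemma coprime_p: "\<not> int p dvd a \<Longrightarrow> coprime a (int p)"
  by (metis coprime_commute prime_imp_coprime prime_int)

lemma fact_int: "(fact n :: int) = (\<Prod>i\<in>{1..n}. int i)"
  by (simp add: fact_prod)

lemma wilson_half: "[(fact h :: int)^2 = (-1)^(h+1)] (mod int p)"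
proof -
  have w: "[(fact (p-1)::int) = -1] (mod int p)" using wilson_theorem[OF pr] by simp
  have split: "{1..p-1} = {1..h} \<union> {h+1..p-1}" using p_eq by auto
  have f1: "(fact (p-1)::int) = (\<Prod>i\<in>{1..h}. int i) * (\<Prod>i\<in>{h+1..p-1}. int i)"
    unfolding fact_int split by (rule prod.union_disjoint) auto
  have f2: "(\<Prod>i\<in>{h+1..p-1}. int i) = (\<Prod>i\<in>{1..h}. int p - int i)"
    by (rule prod.reindex_bij_witness[of _ "\<lambda>i. p - i" "\<lambda>i. p - i"]) (use p_eq in auto)
  have f3: "[(\<Prod>i\<in>{1..h}. int p - int i) = (\<Prod>i\<in>{1..h}. - int i)] (mod int p)"
    by (rule cong_prod) (simp add: cong_def mod_diff_left_eq[symmetric])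
  have f4: "(\<Prod>i\<in>{1..h}. - int i) = (-1)^h * fact h"
    by (simp add: prod_uminus fact_int)
  have f5: "(fact (p-1)::int) = fact h * (\<Prod>i\<in>{1..h}. int p - int i)"
    using f1 f2 by (simp add: fact_int)
  have "[(fact (p-1)::int) = fact h * ((-1)^h * fact h)] (mod int p)"
    unfolding f5 f4[symmetric] by (rule cong_mult[OF cong_refl f3])
  then have "[(fact h::int) * ((-1)^h * fact h) = -1] (mod int p)"
    using w cong_sym cong_trans by blast
  then have "[(-1)^h * ((fact h::int) * ((-1)^h * fact h)) = (-1)^h * -1] (mod int p)"
    using cong_mult cong_refl by blast
  moreover have "(-1)^h * ((fact h::int) * ((-1)^h * fact h)) = (fact h)^2"
  proof -
    have "((-1::int)^h * (-1)^h) = 1" by (simp flip: power_add)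
    then show ?thesis by (simp add: power2_eq_square algebra_simps)
  qed
  ultimately show ?thesis by simp
qed

end


context oddp begin

lemma cong_lmult: "[a = b] (mod m) \<Longrightarrow> [c * a = c * b] (mod m)" for a b c m :: int
  by (simp add: cong_scalar_left)

lemma small_dvd: "int p dvd x \<Longrightarrow> \<bar>x\<bar> < int p \<Longrightarrow> x = 0" for x :: int
  using dvd_imp_le_int[of x "int p"] by force

lemma claim1:
  assumes s: "s \<in> {1..p-1}"
  shows "[int s * (\<Prod>a\<in>{1..p-1}-{s}. int s - int a) = -1] (mod int p)"
proof -
  define M where "M = {1..p-1} - {s}"
  define g where "g a = nat ((int s - int a) mod int p)" for a
  have gM: "g a \<in> M" if "a \<in> M" for a
  proof -
    have a: "1 \<le> a" "a \<le> p - 1" "a \<noteq> s" using that unfolding M_def by auto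
    have "(int s - int a) mod int p \<noteq> 0"
    proof
      assume "(int s - int a) mod int p = 0"
      then have "int p dvd int s - int a" by auto
      moreover have "\<bar>int s - int a\<bar> < int p" using a s by auto
      ultimately have "int s - int a = 0" by (rule small_dvd)
      then show False using a by simp
    qed
    moreover have "(int s - int a) mod int p \<noteq> int s"
    proof
      assume "(int s - int a) mod int p = int s"
      moreover have "int s mod int p = int s" using s p_ge3 by (intro mod_pos_pos_trivial) auto
      ultimately have "(int s - int a) mod int p = int s mod int p" by simp
      then have "int p dvd (int s - int a) - int s" by (simp add: mod_eq_dvd_iff)
      then have "int p dvd int a" by (simp add: dvd_minus_iff)
      then have "p dvd a" by simp
      then have "p \<le> a" using a by (intro dvd_imp_le) auto
      then show False using a by simp
    qed
    moreover have "0 \<le> (int s - int a) mod int p" "(int s - int a) mod int p < int p"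
      using p_ge3 by auto
    ultimately have "1 \<le> nat ((int s - int a) mod int p)" "nat ((int s - int a) mod int p) \<le> p - 1"
      "nat ((int s - int a) mod int p) \<noteq> s" by linarith+
    then show ?thesis unfolding M_def g_def by auto
  qed
  have ginj: "inj_on g M"
  proof
    fix a b assume ab: "a \<in> M" "b \<in> M" "g a = g b"
    then have "(int s - int a) mod int p = (int s - int b) mod int p"
      unfolding g_def using p_ge3 by (simp add: nat_eq_iff2)
    then have "int p dvd (int s - int a) - (int s - int b)" by (simp add: mod_eq_dvd_iff)
    then have "int p dvd int b - int a" by simp
    moreover have "\<bar>int b - int a\<bar> < int p" using ab unfolding M_def by auto
    ultimately have "int b - int a = 0" by (rule small_dvd)
    then show "a = b" by simp
  qed
  have fM: "finite M" by (simp add: M_def)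
  have sub: "g ` M \<subseteq> M" using gM by auto
  have gim: "g ` M = M" using endo_inj_surj[OF fM sub ginj] .
  have "(\<Prod>b\<in>M. int b) = (\<Prod>a\<in>M. int (g a))"
    using prod.reindex[OF ginj, of int] gim by simp
  moreover have "[(\<Prod>a\<in>M. int (g a)) = (\<Prod>a\<in>M. int s - int a)] (mod int p)"
    by (rule cong_prod) (use p_ge3 in \<open>simp add: g_def cong_def\<close>)
  ultimately have c1: "[(\<Prod>a\<in>M. int s - int a) = (\<Prod>b\<in>M. int b)] (mod int p)"
    by (simp add: cong_sym)
  have "int s * (\<Prod>b\<in>M. int b) = (\<Prod>b\<in>{1..p-1}. int b)"
    unfolding M_def using s by (simp add: prod.remove)
  also have "\<dots> = fact (p-1)" by (simp add: fact_int)
  finally have "[int s * (\<Prod>b\<in>M. int b) = -1] (mod int p)"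
    using wilson_theorem[OF pr] by simp
  then show ?thesis unfolding M_def[symmetric]
    using cong_lmult[OF c1, of "int s"] cong_trans by blast
qed

lemma shift_lemma:
  assumes s: "s \<in> S"
  shows "[int s * (\<Prod>i\<in>S-{s}. int i - int s) * (\<Prod>i\<in>S. int i + int s) = (-1)^h] (mod int p)"
proof -
  have sM: "s \<in> {1..p-1}" using s p_eq by auto
  have spl: "{1..p-1} - {s} = (S - {s}) \<union> {h+1..p-1}" using s p_eq by auto
  have e1: "(\<Prod>a\<in>{1..p-1}-{s}. int s - int a) =
     (\<Prod>a\<in>S-{s}. int s - int a) * (\<Prod>a\<in>{h+1..p-1}. int s - int a)"
    unfolding spl by (rule prod.union_disjoint) auto
  have e2: "(\<Prod>a\<in>{h+1..p-1}. int s - int a) = (\<Prod>i\<in>S. int s - (int p - int i))"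
    by (rule prod.reindex_bij_witness[of _ "\<lambda>i. p - i" "\<lambda>i. p - i"]) (use p_eq in auto)
  have e3: "[(\<Prod>i\<in>S. int s - (int p - int i)) = (\<Prod>i\<in>S. int i + int s)] (mod int p)"
    by (rule cong_prod) (simp add: cong_iff_dvd_diff)
  have cS: "card (S - {s}) = h - 1" using s by simp
  have e4: "(\<Prod>a\<in>S-{s}. int s - int a) = (-1)^(h-1) * (\<Prod>a\<in>S-{s}. int a - int s)"
  proof -
    have "(\<Prod>a\<in>S-{s}. int s - int a) = (\<Prod>a\<in>S-{s}. - (int a - int s))" by simp
    also have "\<dots> = (-1)^(h-1) * (\<Prod>a\<in>S-{s}. int a - int s)" by (simp only: prod_uminus cS)
    finally show ?thesis .
  qed
  define X where "X = (\<Prod>i\<in>S-{s}. int i - int s)"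
  define Y where "Y = (\<Prod>i\<in>S. int i + int s)"
  have "[(\<Prod>a\<in>{1..p-1}-{s}. int s - int a) = (-1)^(h-1) * X * Y] (mod int p)"
    unfolding e1 e2 e4 X_def Y_def mult.assoc by (rule cong_lmult, rule cong_lmult[OF e3])
  then have "[int s * (\<Prod>a\<in>{1..p-1}-{s}. int s - int a) = int s * ((-1)^(h-1) * X * Y)] (mod int p)"
    by (rule cong_lmult)
  then have "[int s * ((-1)^(h-1) * X * Y) = -1] (mod int p)"
    using claim1[OF sM] cong_sym cong_trans by blast
  then have c: "[(-1)^(h-1) * (int s * ((-1)^(h-1) * X * Y)) = (-1)^(h-1) * -1] (mod int p)"
    by (rule cong_lmult)
  have eq1: "(-1)^(h-1) * (int s * ((-1)^(h-1) * X * Y)) = int s * X * Y"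
  proof -
    have "((-1::int)^(h-1) * (-1)^(h-1)) = 1" by (simp flip: power_add)
    then show ?thesis by (simp add: algebra_simps)
  qed
  have eq2: "(-1::int)^(h-1) * -1 = (-1)^h"
  proof -
    have "h = Suc (h-1)" using h_pos by simp
    then have "(-1::int)^h = (-1)^Suc (h-1)" by simp
    then show ?thesis by simp
  qed
  from c have "[int s * X * Y = (-1)^h] (mod int p)" by (simp only: eq1 eq2)
  then show ?thesis by (simp only: X_def Y_def)
qed

lemma dvd_diff_S: "i \<in> S \<Longrightarrow> s \<in> S \<Longrightarrow> int p dvd int i - int s \<longleftrightarrow> i = s"
proof
  assume "i \<in> S" "s \<in> S" "int p dvd int i - int s"
  moreover have "\<bar>int i - int s\<bar> < int p" using \<open>i \<in> S\<close> \<open>s \<in> S\<close> p_eq by auto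
  ultimately show "i = s" using small_dvd by fastforce
qed simp

lemma ndvd_sum_S: "i \<in> S \<Longrightarrow> s \<in> S \<Longrightarrow> \<not> int p dvd int i + int s"
proof
  assume "i \<in> S" "s \<in> S" "int p dvd int i + int s"
  moreover have "\<bar>int i + int s\<bar> < int p" "int i + int s \<noteq> 0" using \<open>i \<in> S\<close> \<open>s \<in> S\<close> p_eq by auto
  ultimately show False using small_dvd by blast
qed

definition nrm :: "int \<Rightarrow> int" where
  "nrm x = (if x mod int p \<le> int h then x mod int p else int p - x mod int p)"

lemma nrm_props:
  assumes "\<not> int p dvd x"
  shows "nat (nrm x) \<in> S" "int (nat (nrm x)) = nrm x"
    "x mod int p \<le> int h \<Longrightarrow> [x = nrm x] (mod int p)"
    "\<not> x mod int p \<le> int h \<Longrightarrow> [x = - nrm x] (mod int p)"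
proof -
  have n0: "x mod int p \<noteq> 0" using assms by (simp add: dvd_eq_mod_eq_0)
  have g0: "0 \<le> x mod int p" using p_ge3 by simp
  have r: "0 < x mod int p" "x mod int p < int p" using p_ge3 le_neq_trans[OF g0] n0 by auto
  define m where "m = x mod int p"
  have mr: "0 < m" "m < int p" using r by (auto simp: m_def)
  have nm: "nrm x = (if m \<le> int h then m else int p - m)" by (simp add: nrm_def m_def)
  have b: "1 \<le> nrm x \<and> nrm x \<le> int h"
  proof (cases "m \<le> int h")
    case True then show ?thesis using mr nm by simp
  next
    case False then show ?thesis using mr nm p_eq by simp
  qed
  show "nat (nrm x) \<in> S" "int (nat (nrm x)) = nrm x" using b by auto
  show "x mod int p \<le> int h \<Longrightarrow> [x = nrm x] (mod int p)"
    by (simp add: nrm_def cong_def)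
  show "\<not> x mod int p \<le> int h \<Longrightarrow> [x = - nrm x] (mod int p)"
  proof -
    have "x - - (int p - x mod int p) = int p * (x div int p + 1)"
      using div_mult_mod_eq[of x "int p"] by (simp add: algebra_simps)
    then show "\<not> x mod int p \<le> int h \<Longrightarrow> [x = - nrm x] (mod int p)"
      by (simp add: nrm_def cong_iff_dvd_diff)
  qed
qed

lemma perj:
  assumes nx: "\<not> int p dvd x"
  shows "[nrm x * (\<Prod>i\<in>{i\<in>S. \<not> int p dvd int i - x}. int i - x)
            * (\<Prod>i\<in>{i\<in>S. \<not> int p dvd int i + x}. int i + x) = (-1)^h] (mod int p)"
proof -
  define s where "s = nat (nrm x)"
  have sS: "s \<in> S" and si: "int s = nrm x" using nrm_props[OF nx] by (auto simp: s_def)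
  show ?thesis
  proof (cases "x mod int p \<le> int h")
    case True
    have xs: "[x = int s] (mod int p)" using nrm_props(3)[OF nx True] si by simp
    have d: "int p dvd int i - x \<longleftrightarrow> int p dvd int i - int s" for i
      by (rule cong_dvd_iff, rule cong_diff[OF cong_refl xs])
    have d2: "int p dvd int i + x \<longleftrightarrow> int p dvd int i + int s" for i
      by (rule cong_dvd_iff, rule cong_add[OF cong_refl xs])
    have A1: "{i\<in>S. \<not> int p dvd int i - x} = S - {s}" using dvd_diff_S[OF _ sS] sS by (auto simp: d)
    have A2: "{i\<in>S. \<not> int p dvd int i + x} = S" using ndvd_sum_S[OF _ sS] by (auto simp: d2)
    have c1: "[(\<Prod>i\<in>S-{s}. int i - x) = (\<Prod>i\<in>S-{s}. int i - int s)] (mod int p)"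
      by (rule cong_prod, rule cong_diff[OF cong_refl xs])
    have c2: "[(\<Prod>i\<in>S. int i + x) = (\<Prod>i\<in>S. int i + int s)] (mod int p)"
      by (rule cong_prod, rule cong_add[OF cong_refl xs])
    have "[nrm x * (\<Prod>i\<in>S-{s}. int i - x) * (\<Prod>i\<in>S. int i + x) =
           int s * (\<Prod>i\<in>S-{s}. int i - int s) * (\<Prod>i\<in>S. int i + int s)] (mod int p)"
      unfolding si[symmetric] by (intro cong_mult cong_refl c1 c2)
    then show ?thesis unfolding A1 A2 using shift_lemma[OF sS] cong_trans by blast
  next
    case False
    have xs: "[x = - int s] (mod int p)" using nrm_props(4)[OF nx False] si by simp
    have d: "int p dvd int i - x \<longleftrightarrow> int p dvd int i + int s" for i
    proof -
      have "[int i - x = int i + int s] (mod int p)" using cong_diff[OF cong_refl xs, of "int i"] by simp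
      then show ?thesis by (rule cong_dvd_iff)
    qed
    have d2: "int p dvd int i + x \<longleftrightarrow> int p dvd int i - int s" for i
    proof -
      have "[int i + x = int i - int s] (mod int p)" using cong_add[OF cong_refl xs, of "int i"] by simp
      then show ?thesis by (rule cong_dvd_iff)
    qed
    have A1: "{i\<in>S. \<not> int p dvd int i - x} = S" using ndvd_sum_S[OF _ sS] by (auto simp: d)
    have A2: "{i\<in>S. \<not> int p dvd int i + x} = S - {s}" using dvd_diff_S[OF _ sS] sS by (auto simp: d2)
    have c1: "[(\<Prod>i\<in>S-{s}. int i + x) = (\<Prod>i\<in>S-{s}. int i - int s)] (mod int p)"
      by (rule cong_prod) (use cong_add[OF cong_refl xs] in simp)
    have c2: "[(\<Prod>i\<in>S. int i - x) = (\<Prod>i\<in>S. int i + int s)] (mod int p)"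
      by (rule cong_prod) (use cong_diff[OF cong_refl xs] in simp)
    have c: "[nrm x * (\<Prod>i\<in>S. int i - x) * (\<Prod>i\<in>S-{s}. int i + x) =
           int s * (\<Prod>i\<in>S. int i + int s) * (\<Prod>i\<in>S-{s}. int i - int s)] (mod int p)"
      unfolding si[symmetric] by (intro cong_mult cong_refl c1 c2)
    have e: "int s * (\<Prod>i\<in>S. int i + int s) * (\<Prod>i\<in>S-{s}. int i - int s) =
       int s * (\<Prod>i\<in>S-{s}. int i - int s) * (\<Prod>i\<in>S. int i + int s)" by (simp add: ac_simps)
    from c have "[nrm x * (\<Prod>i\<in>S. int i - x) * (\<Prod>i\<in>S-{s}. int i + x) =
           int s * (\<Prod>i\<in>S-{s}. int i - int s) * (\<Prod>i\<in>S. int i + int s)] (mod int p)" unfolding e .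
    then show ?thesis unfolding A1 A2 using shift_lemma[OF sS] cong_trans by blast
  qed
qed

end


context oddp begin

lemma ndvd_S: "j \<in> S \<Longrightarrow> \<not> int p dvd int j"
proof
  assume "j \<in> S" "int p dvd int j"
  then have "p dvd j" by simp
  then have "p \<le> j" using \<open>j \<in> S\<close> by (intro dvd_imp_le) auto
  then show False using \<open>j \<in> S\<close> p_eq by simp
qed

lemma ndvd_mult: "\<not> int p dvd a \<Longrightarrow> \<not> int p dvd b \<Longrightarrow> \<not> int p dvd a * b"
  using prime_int by (simp add: prime_dvd_mult_iff)

lemma nrm_dvd: "\<not> int p dvd x \<Longrightarrow> int p dvd x - nrm x \<or> int p dvd x + nrm x"
  using nrm_props(3,4)[of x] by (auto simp: cong_iff_dvd_diff)

lemma four_dvd: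
  fixes d x y n :: int
  assumes "d dvd x - n \<or> d dvd x + n" "d dvd y - n \<or> d dvd y + n"
  shows "d dvd x - y \<or> d dvd x + y"
proof -
  show ?thesis using assms
  proof (elim disjE)
    assume "d dvd x - n" "d dvd y - n" then have "d dvd (x - n) - (y - n)" by (rule dvd_diff) then show ?thesis by simp
  next
    assume "d dvd x - n" "d dvd y + n" then have "d dvd (x - n) + (y + n)" by (rule dvd_add) then show ?thesis by simp
  next
    assume "d dvd x + n" "d dvd y - n" then have "d dvd (x + n) + (y - n)" by (rule dvd_add) then show ?thesis by simp
  next
    assume "d dvd x + n" "d dvd y + n" then have "d dvd (x + n) - (y + n)" by (rule dvd_diff) then show ?thesis by simp
  qed
qed

lemma nrm_bij:
  assumes na: "\<not> int p dvd a"
  shows "(\<Prod>j\<in>S. nrm (a * int j)) = fact h"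
proof -
  define \<phi> where "\<phi> j = nat (nrm (a * int j))" for j
  have nz: "\<not> int p dvd a * int j" if "j \<in> S" for j using ndvd_mult[OF na ndvd_S[OF that]] .
  have \<phi>S: "\<phi> j \<in> S" if "j \<in> S" for j using nrm_props(1)[OF nz[OF that]] by (simp add: \<phi>_def)
  have \<phi>i: "int (\<phi> j) = nrm (a * int j)" if "j \<in> S" for j using nrm_props(2)[OF nz[OF that]] by (simp add: \<phi>_def)
  have inj: "inj_on \<phi> S"
  proof
    fix j k assume jk: "j \<in> S" "k \<in> S" "\<phi> j = \<phi> k"
    then have e: "nrm (a * int j) = nrm (a * int k)" using \<phi>i[OF jk(1)] \<phi>i[OF jk(2)] by simp
    have "int p dvd a * int j - a * int k \<or> int p dvd a * int j + a * int k"
      using four_dvd[OF nrm_dvd[OF nz[OF jk(1)]]] nrm_dvd[OF nz[OF jk(2)]] unfolding e by blast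
    then have "int p dvd a * (int j - int k) \<or> int p dvd a * (int j + int k)"
      by (simp add: algebra_simps)
    then have "int p dvd int j - int k \<or> int p dvd int j + int k"
      using na prime_int by (auto simp: prime_dvd_mult_iff)
    then show "j = k" using dvd_diff_S[OF jk(1,2)] ndvd_sum_S[OF jk(1,2)] by auto
  qed
  have sub: "\<phi> ` S \<subseteq> S" using \<phi>S by auto
  have im: "\<phi> ` S = S" using endo_inj_surj[OF _ sub inj] by simp
  have "(\<Prod>j\<in>S. nrm (a * int j)) = (\<Prod>j\<in>S. int (\<phi> j))" using \<phi>i by simp
  also have "\<dots> = (\<Prod>j\<in>\<phi> ` S. int j)" using prod.reindex[OF inj, of int] by simp
  also have "\<dots> = fact h" unfolding im by (simp add: fact_int)
  finally show ?thesis .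
qed

lemma P12:
  assumes na: "\<not> int p dvd a"
  shows "[(\<Prod>(i,j)\<in>{(i,j). i \<in> S \<and> j \<in> S \<and> \<not> int p dvd int i - a * int j}. int i - a * int j) *
          (\<Prod>(i,j)\<in>{(i,j). i \<in> S \<and> j \<in> S \<and> \<not> int p dvd int i + a * int j}. int i + a * int j) *
          fact h = (-1)^h] (mod int p)"
proof -
  have nz: "\<not> int p dvd a * int j" if "j \<in> S" for j using ndvd_mult[OF na ndvd_S[OF that]] .
  have "(\<Prod>(i,j)\<in>{(i,j). i \<in> S \<and> j \<in> S \<and> \<not> int p dvd int i - a * int j}. int i - a * int j) *
          (\<Prod>(i,j)\<in>{(i,j). i \<in> S \<and> j \<in> S \<and> \<not> int p dvd int i + a * int j}. int i + a * int j) *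
          fact h =
        (\<Prod>j\<in>S. (\<Prod>i\<in>{i\<in>S. \<not> int p dvd int i - a * int j}. int i - a * int j)) *
        (\<Prod>j\<in>S. (\<Prod>i\<in>{i\<in>S. \<not> int p dvd int i + a * int j}. int i + a * int j)) *
        (\<Prod>j\<in>S. nrm (a * int j))"
    by (simp only: prod_pairs_snd[OF finite_atLeastAtMost] nrm_bij[OF na])
  also have "\<dots> = (\<Prod>j\<in>S. nrm (a * int j) * (\<Prod>i\<in>{i\<in>S. \<not> int p dvd int i - a * int j}. int i - a * int j)
        * (\<Prod>i\<in>{i\<in>S. \<not> int p dvd int i + a * int j}. int i + a * int j))"
    by (simp add: prod.distrib ac_simps)
  finally have e: "(\<Prod>(i,j)\<in>{(i,j). i \<in> S \<and> j \<in> S \<and> \<not> int p dvd int i - a * int j}. int i - a * int j) *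
          (\<Prod>(i,j)\<in>{(i,j). i \<in> S \<and> j \<in> S \<and> \<not> int p dvd int i + a * int j}. int i + a * int j) *
          fact h = (\<Prod>j\<in>S. nrm (a * int j) * (\<Prod>i\<in>{i\<in>S. \<not> int p dvd int i - a * int j}. int i - a * int j)
        * (\<Prod>i\<in>{i\<in>S. \<not> int p dvd int i + a * int j}. int i + a * int j))" .
  have "[(\<Prod>j\<in>S. nrm (a * int j) * (\<Prod>i\<in>{i\<in>S. \<not> int p dvd int i - a * int j}. int i - a * int j)
        * (\<Prod>i\<in>{i\<in>S. \<not> int p dvd int i + a * int j}. int i + a * int j)) = (\<Prod>j\<in>S. (-1)^h)] (mod int p)"
    by (rule cong_prod) (rule perj[OF nz])
  moreover have "(\<Prod>j\<in>S. (-1::int)^h) = (-1)^h"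
  proof -
    have "(\<Prod>j\<in>S. (-1::int)^h) = (-1)^(h*h)" by (simp add: power_mult)
    also have "\<dots> = (-1)^h" by (cases "even h") (auto simp: minus_one_power_iff)
    finally show ?thesis .
  qed
  ultimately show ?thesis unfolding e by simp
qed

end


context oddp begin

definition Z1 :: "int \<Rightarrow> (nat \<times> nat) set" where
  "Z1 a = {(i,j). i \<in> S \<and> j \<in> S \<and> int p dvd int i - a * int j}"
definition Z2 :: "int \<Rightarrow> (nat \<times> nat) set" where
  "Z2 a = {(i,j). i \<in> S \<and> j \<in> S \<and> int p dvd int j + a * int i}"

lemma Z_finite: "finite (Z1 a)" "finite (Z2 a)"
proof -
  have s1: "Z1 a \<subseteq> S \<times> S" and s2: "Z2 a \<subseteq> S \<times> S" by (auto simp: Z1_def Z2_def)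
  have f: "finite (S \<times> S)" by simp
  show "finite (Z1 a)" by (rule finite_subset[OF s1 f])
  show "finite (Z2 a)" by (rule finite_subset[OF s2 f])
qed

lemma ZU:
  assumes na: "\<not> int p dvd a"
  shows "card (Z1 a) + card (Z2 a) = h"
    "(\<Prod>(i,j)\<in>Z1 a. int j) * (\<Prod>(i,j)\<in>Z2 a. int i) = fact h"
    "inj_on snd (Z1 a)" "inj_on fst (Z2 a)"
    "fst ` Z2 a = S - snd ` Z1 a"
proof -
  show inj1: "inj_on snd (Z1 a)"
  proof (rule inj_onI)
    fix x y assume xy: "x \<in> Z1 a" "y \<in> Z1 a" "snd x = snd y"
    obtain i j i' where x: "x = (i,j)" and y: "y = (i',j)" using xy(3) by (cases x, cases y) auto
    have h1: "int p dvd int i - a * int j" "int p dvd int i' - a * int j" using xy x y by (auto simp: Z1_def)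
    have "int p dvd (int i - a * int j) - (int i' - a * int j)" using dvd_diff[OF h1] .
    then have "int p dvd int i - int i'" by simp
    then show "x = y" using dvd_diff_S xy x y by (auto simp: Z1_def)
  qed
  show inj2: "inj_on fst (Z2 a)"
  proof (rule inj_onI)
    fix x y assume xy: "x \<in> Z2 a" "y \<in> Z2 a" "fst x = fst y"
    obtain i j j' where x: "x = (i,j)" and y: "y = (i,j')" using xy(3) by (cases x, cases y) auto
    have h1: "int p dvd int j + a * int i" "int p dvd int j' + a * int i" using xy x y by (auto simp: Z2_def)
    have "int p dvd (int j + a * int i) - (int j' + a * int i)" using dvd_diff[OF h1] .
    then have "int p dvd int j - int j'" by simp
    then show "x = y" using dvd_diff_S xy x y by (auto simp: Z2_def)
  qed
  show im: "fst ` Z2 a = S - snd ` Z1 a"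
  proof (rule Set.set_eqI)
    fix i
    show "i \<in> fst ` Z2 a \<longleftrightarrow> i \<in> S - snd ` Z1 a"
    proof (cases "i \<in> S")
      case False then show ?thesis by (auto simp: Z1_def Z2_def)
    next
      case iS: True
      have nz: "\<not> int p dvd a * int i" using ndvd_mult[OF na ndvd_S[OF iS]] .
      define n where "n = nat (nrm (a * int i))"
      have nS: "n \<in> S" and ni: "int n = nrm (a * int i)" using nrm_props(1,2)[OF nz] by (auto simp: n_def)
      have notboth: "\<not> (int p dvd int k - a * int i \<and> int p dvd int j + a * int i)" if "k \<in> S" "j \<in> S" for k j
      proof
        assume "int p dvd int k - a * int i \<and> int p dvd int j + a * int i"
        then have h1: "int p dvd int k - a * int i" "int p dvd int j + a * int i" by auto
        have "int p dvd (int k - a * int i) + (int j + a * int i)" using dvd_add[OF h1] .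
        then have "int p dvd int k + int j" by simp
        then show False using ndvd_sum_S[OF that] by simp
      qed
      have "int p dvd a * int i - nrm (a * int i) \<or> int p dvd a * int i + nrm (a * int i)"
        using nrm_dvd[OF nz] .
      then show ?thesis
      proof
        assume d: "int p dvd a * int i - nrm (a * int i)"
        then have "int p dvd int n - a * int i" unfolding ni by (simp add: dvd_diff_commute)
        then have "(n, i) \<in> Z1 a" using nS iS by (simp add: Z1_def)
        then have "i \<in> snd ` Z1 a" by force
        moreover have "i \<notin> fst ` Z2 a"
        proof
          assume "i \<in> fst ` Z2 a"
          then obtain j where "(i,j) \<in> Z2 a" by auto
          then show False using notboth[OF nS, of j] \<open>int p dvd int n - a * int i\<close> by (auto simp: Z2_def)
        qed
        ultimately show ?thesis by auto
      next
        assume d: "int p dvd a * int i + nrm (a * int i)"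
        then have "int p dvd int n + a * int i" unfolding ni by (simp add: add.commute)
        then have "(i, n) \<in> Z2 a" using nS iS by (simp add: Z2_def)
        then have "i \<in> fst ` Z2 a" by force
        moreover have "i \<notin> snd ` Z1 a"
        proof
          assume "i \<in> snd ` Z1 a"
          then obtain k where "(k,i) \<in> Z1 a" by auto
          then show False using notboth[of k n] nS \<open>int p dvd int n + a * int i\<close> by (auto simp: Z1_def)
        qed
        ultimately show ?thesis using iS by auto
      qed
    qed
  qed
  have US: "snd ` Z1 a \<subseteq> S" by (auto simp: Z1_def)
  have c1: "card (Z1 a) = card (snd ` Z1 a)" using card_image[OF inj1] by simp
  have c2: "card (Z2 a) = card (S - snd ` Z1 a)" using card_image[OF inj2] im by simp
  show "card (Z1 a) + card (Z2 a) = h"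
    unfolding c1 c2 using card_Diff_subset[OF finite_subset[OF US] US] card_mono[OF _ US] by simp
  have p1: "(\<Prod>(i,j)\<in>Z1 a. int j) = (\<Prod>j\<in>snd ` Z1 a. int j)"
    using prod.reindex[OF inj1, of int] by (simp add: comp_def case_prod_beta)
  have p2: "(\<Prod>(i,j)\<in>Z2 a. int i) = (\<Prod>i\<in>S - snd ` Z1 a. int i)"
    using prod.reindex[OF inj2, of int] im by (simp add: comp_def case_prod_beta)
  show "(\<Prod>(i,j)\<in>Z1 a. int j) * (\<Prod>(i,j)\<in>Z2 a. int i) = fact h"
    unfolding p1 p2 fact_int using prod.subset_diff[OF US, of int] by (simp add: mult.commute)
qed

end


context oddp begin

definition Qf :: "int \<Rightarrow> nat \<Rightarrow> nat \<Rightarrow> int" where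
  "Qf A i j = int i ^ 2 - A * int i * int j - int j ^ 2"
definition NN :: "int \<Rightarrow> (nat \<times> nat) set" where
  "NN A = {(i,j). i \<in> S \<and> j \<in> S \<and> \<not> int p dvd Qf A i j}"
definition TT :: "int \<Rightarrow> int" where
  "TT A = (\<Prod>(i,j)\<in>NN A. Qf A i j)"

lemma T_eq: "T p 1 (-A) (-1) = TT A"
  unfolding T_def TT_def NN_def Qf_def h_def by simp

lemma cong_lm: "[a = b] (mod m) \<Longrightarrow> [c * a = c * b] (mod m)" for a b c m :: int
  by (simp add: cong_scalar_left)

lemma prod_pair_distrib:
  "(\<Prod>(i,j)\<in>X. f i j * g i j) = (\<Prod>(i,j)\<in>X. f i j) * (\<Prod>(i,j)\<in>X. g i j)"
  by (simp add: case_prod_beta prod.distrib)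

lemma Tform2:
  assumes ha: "int p dvd a^2 - A*a - 1" and nD: "\<not> int p dvd A^2 + 4"
  shows "[TT A * a^(h*h - h) * (1 + a^2)^h = -1] (mod int p)"
proof -
  have na: "\<not> int p dvd a"
  proof
    assume "int p dvd a"
    then have "int p dvd a * (a - A)" by simp
    then have "int p dvd a * (a - A) - (a^2 - A*a - 1)" using ha by (rule dvd_diff)
    moreover have "a * (a - A) - (a^2 - A*a - 1) = 1" by (simp add: power2_eq_square algebra_simps)
    ultimately show False using p_ge3 by simp
  qed
  have n1: "\<not> int p dvd 1 + a^2"
  proof
    assume d: "int p dvd 1 + a^2"
    then have d2: "int p dvd A*a + 2" using dvd_diff[OF d ha] by (simp add: algebra_simps)
    have "A^2 + 4 = A^2 * (1 + a^2) - (A*a + 2) * (A*a - 2)" by (simp add: power2_eq_square algebra_simps)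
    moreover have "int p dvd A^2 * (1 + a^2) - (A*a + 2) * (A*a - 2)"
      using d d2 by (simp add: dvd_diff)
    ultimately show False using nD by simp
  qed
  define N where "N = NN A"
  have f1: "a * Qf A i j - (int i - a*int j) * (int j + a*int i) = int i * int j * (a^2 - A*a - 1)" for i j
    unfolding Qf_def by (simp add: power2_eq_square algebra_simps)
  have f1c: "[(int i - a*int j) * (int j + a*int i) = a * Qf A i j] (mod int p)" for i j
  proof -
    have "int p dvd int i * int j * (a^2 - A*a - 1)" using ha by simp
    then show ?thesis unfolding cong_iff_dvd_diff f1[symmetric] by (simp add: dvd_diff_commute)
  qed
  have f2: "int p dvd Qf A i j \<longleftrightarrow> int p dvd int i - a*int j \<or> int p dvd int j + a*int i" for i j
  proof -
    have "int p dvd Qf A i j \<longleftrightarrow> int p dvd a * Qf A i j" using na prime_int by (auto simp: prime_dvd_mult_iff)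
    also have "\<dots> \<longleftrightarrow> int p dvd (int i - a*int j) * (int j + a*int i)" using cong_dvd_iff[OF f1c] by simp
    also have "\<dots> \<longleftrightarrow> int p dvd int i - a*int j \<or> int p dvd int j + a*int i"
      using prime_int by (simp add: prime_dvd_mult_iff)
    finally show ?thesis .
  qed
  have f3: "\<not> (int p dvd int i - a*int j \<and> int p dvd int j + a*int i)" if "j \<in> S" for i j
  proof
    assume "int p dvd int i - a*int j \<and> int p dvd int j + a*int i"
    then have "int p dvd (int j + a*int i) - a * (int i - a*int j)" by (simp add: dvd_diff)
    moreover have "(int j + a*int i) - a * (int i - a*int j) = int j * (1 + a^2)"
      by (simp add: power2_eq_square algebra_simps)
    ultimately have "int p dvd int j * (1 + a^2)" by simp
    then show False using ndvd_mult[OF ndvd_S[OF that] n1] by simp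
  qed
  define E1 where "E1 = {(i,j). i \<in> S \<and> j \<in> S \<and> \<not> int p dvd int i - a * int j}"
  define E2 where "E2 = {(i,j). i \<in> S \<and> j \<in> S \<and> \<not> int p dvd int i + a * int j}"
  define E2s where "E2s = {(i,j). i \<in> S \<and> j \<in> S \<and> \<not> int p dvd int j + a * int i}"
  have fin: "finite N" "finite (Z1 a)" "finite (Z2 a)"
    using Z_finite by (auto simp: N_def NN_def intro: finite_subset[of _ "S \<times> S"])
  have E1u: "E1 = N \<union> Z2 a" and E1d: "N \<inter> Z2 a = {}"
    using f2 f3 by (auto simp: E1_def N_def NN_def Z2_def)
  have E2u: "E2s = N \<union> Z1 a" and E2d: "N \<inter> Z1 a = {}"
    using f2 f3 by (auto simp: E2s_def N_def NN_def Z1_def)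
  have SSu: "S \<times> S = N \<union> Z1 a \<union> Z2 a" and Zd: "Z1 a \<inter> Z2 a = {}"
    using f2 f3 by (auto simp: N_def NN_def Z1_def Z2_def)
  have cardN: "card N = h*h - h"
  proof -
    have "h * h = card (N \<union> Z1 a \<union> Z2 a)" using SSu[symmetric] by simp
    also have "\<dots> = card (N \<union> Z1 a) + card (Z2 a)"
      by (rule card_Un_disjoint) (use fin E1d Zd in auto)
    also have "card (N \<union> Z1 a) = card N + card (Z1 a)"
      by (rule card_Un_disjoint) (use fin E2d in auto)
    finally show ?thesis using ZU(1)[OF na] by simp
  qed
  define X where "X = (\<Prod>(i,j)\<in>N. int i - a * int j)"
  define Y where "Y = (\<Prod>(i,j)\<in>N. int j + a * int i)"
  define W2 where "W2 = (\<Prod>(i,j)\<in>Z2 a. int i - a * int j)"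
  define W1 where "W1 = (\<Prod>(i,j)\<in>Z1 a. int j + a * int i)"
  have P1: "(\<Prod>(i,j)\<in>E1. int i - a * int j) = X * W2"
    unfolding E1u X_def W2_def by (rule prod.union_disjoint) (use fin E1d in auto)
  have P2a: "(\<Prod>(i,j)\<in>E2. int i + a * int j) = (\<Prod>(i,j)\<in>E2s. int j + a * int i)"
    by (rule prod.reindex_bij_witness[of _ "\<lambda>(i,j). (j,i)" "\<lambda>(i,j). (j,i)"])
       (auto simp: E2_def E2s_def)
  have P2: "(\<Prod>(i,j)\<in>E2. int i + a * int j) = Y * W1"
    unfolding P2a E2u Y_def W1_def by (rule prod.union_disjoint) (use fin E2d in auto)
  have cXY: "[X * Y = a ^ card N * TT A] (mod int p)"
  proof -
    have "X * Y = (\<Prod>(i,j)\<in>N. (int i - a * int j) * (int j + a * int i))"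
      unfolding X_def Y_def by (simp only: prod_pair_distrib)
    moreover have "[(\<Prod>(i,j)\<in>N. (int i - a * int j) * (int j + a * int i)) = (\<Prod>(i,j)\<in>N. a * Qf A i j)] (mod int p)"
      by (rule cong_prod) (auto simp: f1c)
    moreover have "(\<Prod>(i,j)\<in>N. a * Qf A i j) = a ^ card N * TT A"
      unfolding TT_def N_def by (simp add: prod_pair_distrib)
    ultimately show ?thesis by simp
  qed
  have cW2: "[W2 = (1 + a^2) ^ card (Z2 a) * (\<Prod>(i,j)\<in>Z2 a. int i)] (mod int p)"
  proof -
    have "[W2 = (\<Prod>(i,j)\<in>Z2 a. (1 + a^2) * int i)] (mod int p)"
      unfolding W2_def
    proof (rule cong_prod)
      fix x assume "x \<in> Z2 a"
      then obtain i j where x: "x = (i,j)" and d: "int p dvd int j + a * int i" by (auto simp: Z2_def)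
      have "int i - a * int j - (1 + a^2) * int i = - a * (int j + a * int i)"
        by (simp add: power2_eq_square algebra_simps)
      then show "[(case x of (i,j) \<Rightarrow> int i - a * int j) = (case x of (i,j) \<Rightarrow> (1 + a^2) * int i)] (mod int p)"
        using d unfolding x cong_iff_dvd_diff by simp
    qed
    moreover have "(\<Prod>(i,j)\<in>Z2 a. (1 + a^2) * int i) = (1 + a^2) ^ card (Z2 a) * (\<Prod>(i,j)\<in>Z2 a. int i)"
      by (simp add: prod_pair_distrib)
    ultimately show ?thesis by simp
  qed
  have cW1: "[W1 = (1 + a^2) ^ card (Z1 a) * (\<Prod>(i,j)\<in>Z1 a. int j)] (mod int p)"
  proof -
    have "[W1 = (\<Prod>(i,j)\<in>Z1 a. (1 + a^2) * int j)] (mod int p)"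
      unfolding W1_def
    proof (rule cong_prod)
      fix x assume "x \<in> Z1 a"
      then obtain i j where x: "x = (i,j)" and d: "int p dvd int i - a * int j" by (auto simp: Z1_def)
      have "int j + a * int i - (1 + a^2) * int j = a * (int i - a * int j)"
        by (simp add: power2_eq_square algebra_simps)
      then show "[(case x of (i,j) \<Rightarrow> int j + a * int i) = (case x of (i,j) \<Rightarrow> (1 + a^2) * int j)] (mod int p)"
        using d unfolding x cong_iff_dvd_diff by simp
    qed
    moreover have "(\<Prod>(i,j)\<in>Z1 a. (1 + a^2) * int j) = (1 + a^2) ^ card (Z1 a) * (\<Prod>(i,j)\<in>Z1 a. int j)"
      by (simp add: prod_pair_distrib)
    ultimately show ?thesis by simp
  qed
  have p12: "[X * W2 * (Y * W1) * fact h = (-1)^h] (mod int p)"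
    using P12[OF na] unfolding E1_def[symmetric] E2_def[symmetric] P1 P2 .
  have re: "X * W2 * (Y * W1) * fact h = (X * Y) * (W2 * W1) * fact h" by (simp add: ac_simps)
  have k1: "[(X * Y) * (W2 * W1) * fact h =
         (a ^ card N * TT A) * ((1 + a^2) ^ card (Z2 a) * (\<Prod>(i,j)\<in>Z2 a. int i) *
            ((1 + a^2) ^ card (Z1 a) * (\<Prod>(i,j)\<in>Z1 a. int j))) * fact h] (mod int p)"
    by (intro cong_mult cXY cW1 cW2 cong_refl)
  have k2: "(a ^ card N * TT A) * ((1 + a^2) ^ card (Z2 a) * (\<Prod>(i,j)\<in>Z2 a. int i) *
            ((1 + a^2) ^ card (Z1 a) * (\<Prod>(i,j)\<in>Z1 a. int j))) * fact h
     = TT A * a ^ card N * (1 + a^2) ^ (card (Z1 a) + card (Z2 a)) *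
         ((\<Prod>(i,j)\<in>Z1 a. int j) * (\<Prod>(i,j)\<in>Z2 a. int i)) * fact h"
    by (simp add: power_add ac_simps)
  have k3: "TT A * a ^ card N * (1 + a^2) ^ (card (Z1 a) + card (Z2 a)) *
         ((\<Prod>(i,j)\<in>Z1 a. int j) * (\<Prod>(i,j)\<in>Z2 a. int i)) * fact h
       = TT A * a ^ (h*h - h) * (1 + a^2) ^ h * (fact h)^2"
    unfolding ZU(1,2)[OF na] cardN by (simp add: power2_eq_square)
  from k1 have "[(X * Y) * (W2 * W1) * fact h = TT A * a ^ (h*h - h) * (1 + a^2) ^ h * (fact h)^2] (mod int p)"
    unfolding k2 k3 .
  then have c: "[TT A * a ^ (h*h - h) * (1 + a^2) ^ h * (fact h)^2 = (-1)^h] (mod int p)"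
    using p12 unfolding re using cong_sym cong_trans by blast
  have "[TT A * a ^ (h*h - h) * (1 + a^2) ^ h * (fact h)^2 =
         TT A * a ^ (h*h - h) * (1 + a^2) ^ h * (-1)^(h+1)] (mod int p)"
    by (rule cong_lm[OF wilson_half])
  then have "[TT A * a ^ (h*h - h) * (1 + a^2) ^ h * (-1)^(h+1) = (-1)^h] (mod int p)"
    using c cong_sym cong_trans by blast
  then have c2: "[(-1)^(h+1) * (TT A * a ^ (h*h - h) * (1 + a^2) ^ h * (-1)^(h+1)) = (-1)^(h+1) * (-1)^h] (mod int p)"
    by (rule cong_lm)
  have e1: "(-1::int)^(h+1) * (TT A * a ^ (h*h - h) * (1 + a^2) ^ h * (-1)^(h+1)) = TT A * a ^ (h*h - h) * (1 + a^2) ^ h"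
  proof -
    have "(-1::int)^(h+1) * (-1)^(h+1) = 1" by (simp flip: power_add)
    then show ?thesis by (simp add: ac_simps)
  qed
  have e2: "(-1::int)^(h+1) * (-1)^h = -1"
  proof -
    have "(-1::int)^(h+1) * (-1)^h = (-1)^(2*h+1)" by (simp flip: power_add)
    then show ?thesis by simp
  qed
  from c2 show ?thesis unfolding e1 e2 .
qed

lemma Tform1:
  assumes ha2: "int p dvd a^2 + 1" and hA: "int p dvd 2*a - A"
  shows "2 * card (Z1 a) = h" "[TT A * a^(h*h - card (Z1 a)) * fact h = (-1)^h] (mod int p)"
proof -
  have na: "\<not> int p dvd a"
  proof
    assume "int p dvd a"
    then have h1: "int p dvd a * a" by simp
    have "int p dvd (a^2 + 1) - a * a" using dvd_diff[OF ha2 h1] .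
    then have "int p dvd 1" by (simp add: power2_eq_square)
    then show False using p_ge3 by simp
  qed
  have q1: "[(int i - a*int j)^2 = Qf A i j] (mod int p)" for i j
  proof -
    have "(int i - a*int j)^2 - Qf A i j = int i * int j * (A - 2*a) + int j^2 * (a^2 + 1)"
      unfolding Qf_def by (simp add: power2_eq_square algebra_simps)
    moreover have "int p dvd int i * int j * (A - 2*a) + int j^2 * (a^2 + 1)"
    proof (rule dvd_add)
      have "int p dvd A - 2*a" using hA by (simp add: dvd_diff_commute)
      then show "int p dvd int i * int j * (A - 2*a)" by simp
      show "int p dvd int j^2 * (a^2 + 1)" using ha2 by simp
    qed
    ultimately show ?thesis by (simp add: cong_iff_dvd_diff)
  qed
  have f2: "int p dvd Qf A i j \<longleftrightarrow> int p dvd int i - a*int j" for i j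
  proof -
    have "int p dvd Qf A i j \<longleftrightarrow> int p dvd (int i - a*int j)^2" using cong_dvd_iff[OF q1] by simp
    also have "\<dots> \<longleftrightarrow> int p dvd int i - a*int j" using prime_int by (simp add: prime_dvd_power_iff)
    finally show ?thesis .
  qed
  have f3: "int p dvd int j + a*int i \<longleftrightarrow> int p dvd int i - a*int j" for i j
  proof -
    have e: "int j + a*int i = a * (int i - a*int j) + int j * (a^2 + 1)"
      by (simp add: power2_eq_square algebra_simps)
    have "int p dvd int j * (a^2 + 1)" using ha2 by simp
    then have "int p dvd int j + a*int i \<longleftrightarrow> int p dvd a * (int i - a*int j)"
      unfolding e using dvd_add_left_iff by blast
    also have "\<dots> \<longleftrightarrow> int p dvd int i - a*int j" using na prime_int by (simp add: prime_dvd_mult_iff)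
    finally show ?thesis .
  qed
  have Zeq: "Z1 a = Z2 a" using f3 by (auto simp: Z1_def Z2_def)
  show cZ: "2 * card (Z1 a) = h" using ZU(1)[OF na] Zeq by simp
  define E1 where "E1 = {(i,j). i \<in> S \<and> j \<in> S \<and> \<not> int p dvd int i - a * int j}"
  define E2 where "E2 = {(i,j). i \<in> S \<and> j \<in> S \<and> \<not> int p dvd int i + a * int j}"
  define E2s where "E2s = {(i,j). i \<in> S \<and> j \<in> S \<and> \<not> int p dvd int j + a * int i}"
  have NE: "NN A = E1" using f2 by (auto simp: NN_def E1_def)
  have E2E: "E2s = E1" using f3 by (auto simp: E2s_def E1_def)
  have finE: "finite E1" by (rule finite_subset[of _ "S \<times> S"]) (auto simp: E1_def)
  have cardE: "card E1 = h*h - card (Z1 a)"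
  proof -
    have u: "S \<times> S = E1 \<union> Z1 a" and d: "E1 \<inter> Z1 a = {}" by (auto simp: E1_def Z1_def)
    have "h * h = card (E1 \<union> Z1 a)" using u[symmetric] by simp
    also have "\<dots> = card E1 + card (Z1 a)" by (rule card_Un_disjoint) (use finE Z_finite d in auto)
    finally show ?thesis by simp
  qed
  define P1 where "P1 = (\<Prod>(i,j)\<in>E1. int i - a * int j)"
  have P2a: "(\<Prod>(i,j)\<in>E2. int i + a * int j) = (\<Prod>(i,j)\<in>E2s. int j + a * int i)"
    by (rule prod.reindex_bij_witness[of _ "\<lambda>(i,j). (j,i)" "\<lambda>(i,j). (j,i)"])
       (auto simp: E2_def E2s_def)
  have P2c: "[(\<Prod>(i,j)\<in>E2. int i + a * int j) = a ^ card E1 * P1] (mod int p)"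
  proof -
    have "[(\<Prod>(i,j)\<in>E1. int j + a * int i) = (\<Prod>(i,j)\<in>E1. a * (int i - a * int j))] (mod int p)"
    proof (rule cong_prod)
      fix x assume "x \<in> E1"
      obtain i j where x: "x = (i,j)" by (cases x)
      have "int j + a * int i - a * (int i - a * int j) = int j * (a^2 + 1)"
        by (simp add: power2_eq_square algebra_simps)
      moreover have "int p dvd int j * (a^2 + 1)" using ha2 by simp
      ultimately show "[(case x of (i,j) \<Rightarrow> int j + a * int i) = (case x of (i,j) \<Rightarrow> a * (int i - a * int j))] (mod int p)"
        unfolding x cong_iff_dvd_diff by simp
    qed
    moreover have "(\<Prod>(i,j)\<in>E1. a * (int i - a * int j)) = a ^ card E1 * P1"
      unfolding P1_def by (simp add: prod_pair_distrib)
    ultimately show ?thesis unfolding P2a E2E by simp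
  qed
  have TTc: "[TT A = P1 * P1] (mod int p)"
  proof -
    have "[TT A = (\<Prod>(i,j)\<in>E1. (int i - a * int j) * (int i - a * int j))] (mod int p)"
      unfolding TT_def NE
    proof (rule cong_prod)
      fix x assume "x \<in> E1"
      obtain i j where x: "x = (i,j)" by (cases x)
      show "[(case x of (i,j) \<Rightarrow> Qf A i j) = (case x of (i,j) \<Rightarrow> (int i - a * int j) * (int i - a * int j))] (mod int p)"
        unfolding x using q1[of i j] by (simp add: power2_eq_square cong_sym)
    qed
    then show ?thesis unfolding P1_def by (simp only: prod_pair_distrib)
  qed
  have p12: "[P1 * (\<Prod>(i,j)\<in>E2. int i + a * int j) * fact h = (-1)^h] (mod int p)"
    using P12[OF na] unfolding E1_def[symmetric] E2_def[symmetric] P1_def[symmetric] .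
  have "[P1 * (\<Prod>(i,j)\<in>E2. int i + a * int j) * fact h = P1 * (a ^ card E1 * P1) * fact h] (mod int p)"
    by (intro cong_mult cong_refl P2c)
  moreover have "P1 * (a ^ card E1 * P1) * fact h = (P1 * P1) * a ^ card E1 * fact h" by (simp add: ac_simps)
  moreover have "[(P1 * P1) * a ^ card E1 * fact h = TT A * a ^ card E1 * fact h] (mod int p)"
    by (intro cong_mult cong_refl) (rule cong_sym[OF TTc])
  ultimately have "[P1 * (\<Prod>(i,j)\<in>E2. int i + a * int j) * fact h = TT A * a ^ card E1 * fact h] (mod int p)"
    using cong_trans by simp
  then have "[TT A * a ^ card E1 * fact h = P1 * (\<Prod>(i,j)\<in>E2. int i + a * int j) * fact h] (mod int p)"
    by (rule cong_sym)
  then show "[TT A * a^(h*h - card (Z1 a)) * fact h = (-1)^h] (mod int p)"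
    unfolding cardE using p12 cong_trans by blast
qed

end


context oddp begin

lemma cong_rm: "[a = b] (mod m) \<Longrightarrow> [a * c = b * c] (mod m)" for a b c m :: int
  by (simp add: cong_scalar_right)

lemma cong_neg_swap: "[- a = b] (mod m) \<Longrightarrow> [a = - b] (mod m)" for a b m :: int
proof -
  assume "[- a = b] (mod m)"
  then have "[- a = - (- b)] (mod m)" by simp
  then show ?thesis by (simp only: cong_minus_minus_iff)
qed

lemma case_i:
  assumes hD: "int p dvd A^2 + 4"
  shows "p mod 4 = 1 \<and>
           (\<exists>k::nat\<in>{0,1}.
              [A = 2 * (-1)^k * fact h] (mod int p) \<and>
              (p mod 8 = 1 \<longrightarrow>
                 [TT A = (-1)^((p+7) div 8) * fact h] (mod int p)) \<and>
              (p mod 8 = 5 \<longrightarrow>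
                 [TT A = (-1)^(k + (p-5) div 8)] (mod int p)))"
proof -
  define a where "a = A * (int h + 1)"
  have hA: "int p dvd 2*a - A"
  proof -
    have pi: "int p = 2 * int h + 1" using p_eq by simp
    have "2*a - A = A * int p" unfolding a_def pi by (simp add: algebra_simps)
    then show ?thesis by simp
  qed
  have ha2: "int p dvd a^2 + 1"
  proof -
    have e: "4 * (a^2 + 1) = (A^2 + 4) + (2*a - A) * (2*a + A)" by (simp add: power2_eq_square algebra_simps)
    have d: "int p dvd (A^2 + 4) + (2*a - A) * (2*a + A)" by (rule dvd_add[OF hD]) (simp add: hA)
    from d have d4: "int p dvd 4 * (a^2 + 1)" unfolding e[symmetric] .
    have "\<not> int p dvd 4"
    proof
      assume d4: "int p dvd 4"
      then have "int p \<le> 4" using zdvd_imp_le[of "int p" 4] by simp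
      then have "p = 3 \<or> p = 4" using p_ge3 by linarith
      then have "p = 3" using od by auto
      then show False using d4 by simp
    qed
    then show ?thesis using prime_dvd_multD[OF prime_int d4] by blast
  qed
  define c where "c = card (Z1 a)"
  have hc: "h = 2 * c" using Tform1(1)[OF ha2 hA] by (simp add: c_def)
  have T1: "[TT A * a^(h*h - c) * fact h = 1] (mod int p)"
    using Tform1(2)[OF ha2 hA] unfolding c_def[symmetric] hc by simp
  have p4: "p mod 4 = 1" using p_eq hc by simp
  have asq: "[a^2 = -1] (mod int p)" using ha2 by (simp add: cong_iff_dvd_diff)
  have apow: "[a^(2*n) = (-1)^n] (mod int p)" for n
    using cong_pow[OF asq, of n] by (simp add: power_mult)
  have TTh: "[TT A * fact h = a^c] (mod int p)"
  proof -
    have "[TT A * a^(h*h - c) * fact h * a^c = 1 * a^c] (mod int p)" by (rule cong_rm[OF T1])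
    moreover have "TT A * a^(h*h - c) * fact h * a^c = TT A * fact h * a^(2*(2*c*c))"
    proof -
      have "h*h - c + c = 2*(2*c*c)" using hc by (simp add: algebra_simps)
      then show ?thesis by (simp add: ac_simps flip: power_add)
    qed
    moreover have "[TT A * fact h * a^(2*(2*c*c)) = TT A * fact h * 1] (mod int p)"
      using cong_lm[OF apow[of "2*c*c"], of "TT A * fact h"] by (simp add: power_mult)
    ultimately show ?thesis by (metis cong_sym cong_trans mult_1_left mult_1_right)
  qed
  have wh: "[(fact h)^2 = -1] (mod int p)" using wilson_half hc by simp
  have TTe: "[TT A = - (a^c * fact h)] (mod int p)"
  proof -
    have "[TT A * fact h * fact h = a^c * fact h] (mod int p)" by (rule cong_rm[OF TTh])
    moreover have "TT A * fact h * fact h = TT A * (fact h)^2" by (simp add: power2_eq_square)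
    moreover have "[TT A * (fact h)^2 = TT A * -1] (mod int p)" by (rule cong_lm[OF wh])
    ultimately have "[- TT A = a^c * fact h] (mod int p)" by (metis cong_sym cong_trans mult_minus1_right)
    then show ?thesis by (rule cong_neg_swap)
  qed
  obtain k :: nat where k01: "k \<in> {0,1}" and ak: "[a = (-1)^k * fact h] (mod int p)"
  proof -
    have "(fact h - a) * (fact h + a) = ((fact h)^2 + 1) - (a^2 + 1)" by (simp add: power2_eq_square algebra_simps)
    moreover have "int p dvd ((fact h)^2 + 1) - (a^2 + 1)"
    proof (rule dvd_diff)
      show "int p dvd (fact h)^2 + 1" using wh by (simp add: cong_iff_dvd_diff)
    qed (rule ha2)
    ultimately have "int p dvd (fact h - a) * (fact h + a)" by simp
    then have "int p dvd fact h - a \<or> int p dvd fact h + a" using prime_int by (simp add: prime_dvd_mult_iff)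
    then show ?thesis
    proof
      assume "int p dvd fact h - a"
      then have "[a = (-1)^0 * fact h] (mod int p)" by (simp add: cong_iff_dvd_diff dvd_diff_commute)
      then show ?thesis using that[of 0] by simp
    next
      assume "int p dvd fact h + a"
      then have "[a = (-1)^1 * fact h] (mod int p)" by (simp add: cong_iff_dvd_diff add.commute)
      then show ?thesis using that[of 1] by simp
    qed
  qed
  have Ak: "[A = 2 * (-1)^k * fact h] (mod int p)"
  proof -
    have "[A = 2 * a] (mod int p)" using hA by (simp add: cong_iff_dvd_diff dvd_diff_commute)
    moreover have "[2 * a = 2 * ((-1)^k * fact h)] (mod int p)" by (rule cong_lm[OF ak])
    ultimately show ?thesis by (simp add: cong_trans mult.assoc)
  qed
  have m1: "p mod 8 = 1 \<longrightarrow> [TT A = (-1)^((p+7) div 8) * fact h] (mod int p)"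
  proof
    assume "p mod 8 = 1"
    then have "even c" using p_eq hc by presburger
    then obtain s where cs: "c = 2 * s" by (auto elim: evenE)
    have pe: "(p + 7) div 8 = s + 1" using p_eq hc cs by simp
    have "[a^c * fact h = (-1)^s * fact h] (mod int p)" unfolding cs by (rule cong_rm[OF apow])
    then have "[- (a^c * fact h) = - ((-1)^s * fact h)] (mod int p)" by (simp only: cong_minus_minus_iff)
    then have "[TT A = - ((-1)^s * fact h)] (mod int p)" using TTe cong_trans by blast
    then show "[TT A = (-1)^((p+7) div 8) * fact h] (mod int p)" unfolding pe by simp
  qed
  have m5: "p mod 8 = 5 \<longrightarrow> [TT A = (-1)^(k + (p-5) div 8)] (mod int p)"
  proof
    assume "p mod 8 = 5"
    then have "odd c" using p_eq hc by presburger
    then obtain s where cs: "c = 2 * s + 1" by (auto elim: oddE)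
    have pe: "(p - 5) div 8 = s" using p_eq hc cs by simp
    have "a^c * fact h = a^(2*s) * a * fact h" unfolding cs by (simp add: power_add)
    moreover have "[a^(2*s) * a * fact h = (-1)^s * ((-1)^k * fact h) * fact h] (mod int p)"
      by (intro cong_mult apow ak cong_refl)
    moreover have "(-1)^s * ((-1)^k * fact h) * fact h = (-1)^s * (-1)^k * (fact h)^2"
      by (simp only: power2_eq_square mult.assoc)
    moreover have "[(-1)^s * (-1)^k * (fact h)^2 = (-1)^s * (-1)^k * -1] (mod int p)"
      by (rule cong_lm[OF wh])
    ultimately have "[a^c * fact h = (-1)^s * (-1)^k * -1] (mod int p)"
      by (metis cong_trans)
    then have "[- (a^c * fact h) = - ((-1)^s * (-1)^k * -1)] (mod int p)" by (simp only: cong_minus_minus_iff)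
    then have "[TT A = (-1)^s * (-1)^k] (mod int p)" using TTe cong_trans by fastforce
    then show "[TT A = (-1)^(k + (p-5) div 8)] (mod int p)" unfolding pe by (simp add: power_add mult.commute)
  qed
  show ?thesis using p4 k01 Ak m1 m5 by blast
qed

end


lemma binet_mod:
  fixes m a A :: int
  assumes ha: "m dvd a^2 - A*a - 1"
  shows "m dvd (2*a - A) * lucas_u A n - (a^n - (A - a)^n)"
proof -
  define F where "F n = (2*a - A) * lucas_u A n - (a^n - (A - a)^n)" for n
  have step: "F (Suc (Suc n)) = A * F (Suc n) + F n - (a^n - (A - a)^n) * (a^2 - A*a - 1)" for n
    unfolding F_def by (simp add: power2_eq_square algebra_simps)
  have "m dvd F n \<and> m dvd F (Suc n)"
  proof (induction n)
    case 0 then show ?case by (simp add: F_def)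
  next
    case (Suc n)
    then have "m dvd A * F (Suc n) + F n - (a^n - (A - a)^n) * (a^2 - A*a - 1)"
      using ha by (simp add: dvd_diff dvd_add)
    then show ?case using Suc step by simp
  qed
  then show ?thesis by (simp add: F_def)
qed


context oddp begin

lemma ndvd4: "\<not> int p dvd 4"
proof
  assume d4: "int p dvd 4"
  then have "int p \<le> 4" using zdvd_imp_le[of "int p" 4] by simp
  then have "p = 3 \<or> p = 4" using p_ge3 by linarith
  then have "p = 3" using od by auto
  then show False using d4 by simp
qed

lemma dvd4_cancel: "int p dvd 4 * x \<Longrightarrow> int p dvd x"
  using prime_dvd_multD[OF prime_int] ndvd4 by blast

lemma Legendre1:
  assumes "Legendre D (int p) = 1"
  shows "\<not> int p dvd D" "\<exists>y. [y^2 = D] (mod int p)" "[D^h = 1] (mod int p)"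
proof -
  show "\<not> int p dvd D" using assms by (auto simp: Legendre_def cong_0_iff split: if_splits)
  show "\<exists>y. [y^2 = D] (mod int p)" using assms by (auto simp: Legendre_def QuadRes_def split: if_splits)
  have "[Legendre D (int p) = D ^ ((p - 1) div 2)] (mod int p)" using euler_criterion[OF pr] p_ge3 by simp
  then show "[D^h = 1] (mod int p)" using assms by (simp add: h_def cong_sym)
qed

lemma pm1:
  assumes "\<not> int p dvd a"
  obtains e where "e = 1 \<or> e = -1" "[a^h = e] (mod int p)"
proof -
  have "p - 1 = 2 * h" using p_eq by simp
  then have "[a^(2*h) = 1] (mod int p)" using int_fermat1[OF assms] by simp
  then have "int p dvd a^(2*h) - 1" by (simp add: cong_iff_dvd_diff)
  moreover have "a^(2*h) - 1 = (a^h - 1) * (a^h + 1)" by (simp add: power_mult algebra_simps power2_eq_square)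
  ultimately have "int p dvd a^h - 1 \<or> int p dvd a^h + 1" using prime_dvd_multD[OF prime_int] by simp
  then show ?thesis
  proof
    assume "int p dvd a^h - 1" then show ?thesis using that[of 1] by (simp add: cong_iff_dvd_diff)
  next
    assume "int p dvd a^h + 1" then show ?thesis using that[of "-1"] by (simp add: cong_iff_dvd_diff)
  qed
qed

lemma case_ii:
  assumes L: "Legendre (A^2 + 4) (int p) = 1"
  shows "(p mod 4 = 1 \<longrightarrow> [TT A = - ((A^2 + 4) ^ ((p-1) div 4))] (mod int p)) \<and>
         (p mod 4 = 3 \<longrightarrow> [2 * TT A = - ((A^2 + 4) ^ ((p+1) div 4)) * lucas_u A ((p-1) div 2)] (mod int p))"
proof -
  define D where "D = A^2 + 4"
  have nD: "\<not> int p dvd D" and Dh: "[D^h = 1] (mod int p)" using Legendre1[OF L] by (auto simp: D_def)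
  obtain y where y: "[y^2 = D] (mod int p)" using Legendre1(2)[OF L] by (auto simp: D_def)
  define a where "a = (A + y) * (int h + 1)"
  define \<delta> where "\<delta> = 2*a - A"
  have \<delta>y: "int p dvd \<delta> - y"
  proof -
    have pi: "int p = 2 * int h + 1" using p_eq by simp
    have "\<delta> - y = (A + y) * int p" unfolding \<delta>_def a_def pi by (simp add: algebra_simps)
    then show ?thesis by simp
  qed
  have ha: "int p dvd a^2 - A*a - 1"
  proof -
    have e: "4 * (a^2 - A*a - 1) = (\<delta> - y) * (\<delta> + y) + (y^2 - D)"
      unfolding \<delta>_def D_def by (simp add: power2_eq_square algebra_simps)
    have "int p dvd (\<delta> - y) * (\<delta> + y) + (y^2 - D)"
      using y \<delta>y by (intro dvd_add) (auto simp: cong_iff_dvd_diff)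
    then show ?thesis unfolding e[symmetric] by (rule dvd4_cancel)
  qed
  have T2: "[TT A * a^(h*h - h) * (1 + a^2)^h = -1] (mod int p)" using Tform2[OF ha] nD by (simp add: D_def)
  have na: "\<not> int p dvd a"
  proof
    assume "int p dvd a"
    then have h1: "int p dvd a * (a - A)" by simp
    have "int p dvd a * (a - A) - (a^2 - A*a - 1)" using dvd_diff[OF h1 ha] .
    then show False using p_ge3 by (simp add: power2_eq_square algebra_simps)
  qed
  obtain e where e: "e = 1 \<or> e = -1" and ae: "[a^h = e] (mod int p)" using pm1[OF na] by blast
  have ee: "e * e = 1" using e by auto
  have ad: "[1 + a^2 = a * \<delta>] (mod int p)"
  proof -
    have e: "1 + a^2 - a * \<delta> = - (a^2 - A*a - 1)" unfolding \<delta>_def by (simp add: power2_eq_square algebra_simps)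
    show ?thesis unfolding cong_iff_dvd_diff e using ha by (simp only: dvd_minus_iff)
  qed
  have dd: "[\<delta>^2 = D] (mod int p)"
  proof -
    have e: "\<delta>^2 - D = 4 * (a^2 - A*a - 1)" unfolding \<delta>_def D_def by (simp add: power2_eq_square algebra_simps)
    show ?thesis unfolding cong_iff_dvd_diff e using ha by (rule dvd_mult)
  qed
  have c1: "[(1 + a^2)^h = e * \<delta>^h] (mod int p)"
  proof -
    have "[(1 + a^2)^h = (a * \<delta>)^h] (mod int p)" by (rule cong_pow[OF ad])
    moreover have "[(a * \<delta>)^h = e * \<delta>^h] (mod int p)"
      unfolding power_mult_distrib by (rule cong_rm[OF ae])
    ultimately show ?thesis by (rule cong_trans)
  qed
  have c2: "[a^(h*h - h) = e^(h-1)] (mod int p)"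
  proof -
    have "a^(h*h - h) = (a^h)^(h-1)" by (simp add: power_mult[symmetric] algebra_simps diff_mult_distrib2)
    then show ?thesis using cong_pow[OF ae, of "h-1"] by simp
  qed
  have eh: "e^(h-1) * e = e^h" using h_pos by (metis Suc_diff_1 less_le_trans power_Suc2 zero_less_one)
  have K: "[TT A * e^h * \<delta>^h = -1] (mod int p)"
  proof -
    have "[TT A * a^(h*h - h) * (1 + a^2)^h = TT A * e^(h-1) * (e * \<delta>^h)] (mod int p)"
      by (intro cong_mult cong_refl c1 c2)
    moreover have "TT A * e^(h-1) * (e * \<delta>^h) = TT A * e^h * \<delta>^h" using eh by (simp add: ac_simps)
    ultimately show ?thesis using T2 by (metis cong_sym cong_trans)
  qed
  have part1: "p mod 4 = 1 \<longrightarrow> [TT A = - ((A^2 + 4) ^ ((p-1) div 4))] (mod int p)"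
  proof
    assume "p mod 4 = 1"
    then have "even h" using p_eq by presburger
    then obtain t where ht: "h = 2 * t" by (auto elim: evenE)
    have pt: "(p - 1) div 4 = t" using p_eq ht by simp
    have "e^h = 1" using e ht by (auto simp: power_mult)
    have dt: "[\<delta>^h = D^t] (mod int p)" unfolding ht power_mult using cong_pow[OF dd] by simp
    have K1: "[TT A * D^t = -1] (mod int p)"
      using K dt \<open>e^h = 1\<close> by (metis cong_scalar_left cong_sym cong_trans mult_1_right)
    have "[TT A * (D^t * D^t) = TT A * 1] (mod int p)"
      using cong_lm[OF Dh, of "TT A"] unfolding ht by (simp add: power_add[symmetric] mult_2)
    moreover have "TT A * (D^t * D^t) = (TT A * D^t) * D^t" by (simp add: ac_simps)
    moreover have "[(TT A * D^t) * D^t = -1 * D^t] (mod int p)" by (rule cong_rm[OF K1])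
    ultimately have "[TT A = - (D^t)] (mod int p)" by (metis cong_sym cong_trans mult_1_right mult_minus1)
    then show "[TT A = - ((A^2 + 4) ^ ((p-1) div 4))] (mod int p)" unfolding pt D_def .
  qed
  have part3: "p mod 4 = 3 \<longrightarrow> [2 * TT A = - ((A^2 + 4) ^ ((p+1) div 4)) * lucas_u A ((p-1) div 2)] (mod int p)"
  proof
    assume "p mod 4 = 3"
    then have "odd h" using p_eq by presburger
    then obtain t where ht: "h = 2 * t + 1" by (auto elim: oddE)
    have pt: "(p + 1) div 4 = t + 1" using p_eq ht by simp
    have hp: "(p - 1) div 2 = h" by (simp add: h_def)
    have "e^h = e" using e ht by (auto simp: power_mult)
    then have K3: "[TT A * e * \<delta>^h = -1] (mod int p)" using K by simp
    define b where "b = A - a"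
    have ab: "[a * b = -1] (mod int p)"
    proof -
      have eq: "a * b - -1 = - (a^2 - A*a - 1)" unfolding b_def by (simp add: power2_eq_square algebra_simps)
      show ?thesis unfolding cong_iff_dvd_diff eq using ha by (simp only: dvd_minus_iff)
    qed
    have "[(a * b)^h = (-1)^h] (mod int p)" by (rule cong_pow[OF ab])
    then have "[a^h * b^h = -1] (mod int p)" using \<open>odd h\<close> by (simp add: power_mult_distrib)
    moreover have "[a^h * b^h = e * b^h] (mod int p)" by (rule cong_rm[OF ae])
    ultimately have "[e * b^h = -1] (mod int p)" using cong_sym cong_trans by blast
    then have "[e * (e * b^h) = e * -1] (mod int p)" by (rule cong_lm)
    then have bh: "[b^h = - e] (mod int p)" using ee by (simp add: mult.assoc[symmetric])
    have bin: "[\<delta> * lucas_u A h = a^h - b^h] (mod int p)"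
      using binet_mod[OF ha, of h] unfolding \<delta>_def b_def by (simp add: cong_iff_dvd_diff)
    have "[a^h - b^h = e - - e] (mod int p)" by (intro cong_diff ae bh)
    then have du: "[\<delta> * lucas_u A h = 2 * e] (mod int p)" using bin cong_trans by fastforce
    have Dt: "[D^(t+1) = \<delta>^(h+1)] (mod int p)"
    proof -
      have "h + 1 = 2 * (t + 1)" using ht by simp
      then have "\<delta>^(h+1) = \<delta>^(2 * (t+1))" by simp
      also have "\<dots> = (\<delta>^2)^(t+1)" by (rule power_mult)
      finally have "\<delta>^(h+1) = (\<delta>^2)^(t+1)" .
      then show ?thesis using cong_pow[OF dd, of "t+1"] by (simp add: cong_sym)
    qed
    have d2h: "[\<delta>^(2*h) = 1] (mod int p)"
    proof -
      have "[(\<delta>^2)^h = D^h] (mod int p)" by (rule cong_pow[OF dd])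
      then show ?thesis using Dh by (simp add: power_mult cong_trans)
    qed
    have R: "[\<delta> * (- (D^(t+1)) * lucas_u A h) = - (\<delta>^(h+1)) * (2 * e)] (mod int p)"
    proof -
      have e0: "\<delta> * (- (D^(t+1)) * lucas_u A h) = - (D^(t+1)) * (\<delta> * lucas_u A h)" by (simp add: ac_simps)
      have "[- (D^(t+1)) * (\<delta> * lucas_u A h) = - (\<delta>^(h+1)) * (2 * e)] (mod int p)"
        by (intro cong_mult du cong_minus_minus_iff[THEN iffD2] Dt)
      then show ?thesis unfolding e0 .
    qed
    have Lh: "[\<delta> * (2 * TT A) = - (\<delta>^(h+1)) * (2 * e)] (mod int p)"
    proof -
      have "[(- 2 * e * \<delta>^(h+1)) * (TT A * e * \<delta>^h) = (- 2 * e * \<delta>^(h+1)) * -1] (mod int p)"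
        by (rule cong_lm[OF K3])
      moreover have "(- 2 * e * \<delta>^(h+1)) * (TT A * e * \<delta>^h) = - 2 * TT A * \<delta> * \<delta>^(2*h)"
      proof -
        define X where "X = \<delta>^h"
        have x1: "\<delta>^(h+1) = \<delta> * X" unfolding X_def by simp
        have x2: "\<delta>^(2*h) = X * X" unfolding X_def mult_2 by (rule power_add)
        have "(- 2 * e * (\<delta> * X)) * (TT A * e * X) = - 2 * TT A * \<delta> * (X * X) * (e * e)"
          by (simp add: ac_simps)
        then show ?thesis unfolding x1 x2[symmetric] X_def[symmetric] ee by simp
      qed
      moreover have "[- 2 * TT A * \<delta> * \<delta>^(2*h) = - 2 * TT A * \<delta> * 1] (mod int p)"
        by (rule cong_lm[OF d2h])
      ultimately have "[- 2 * TT A * \<delta> = 2 * e * \<delta>^(h+1)] (mod int p)"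
        by (metis (no_types, lifting) cong_sym cong_trans mult_1_right mult_minus1_right minus_mult_minus mult.assoc)
      then have "[- (- 2 * TT A * \<delta>) = - (2 * e * \<delta>^(h+1))] (mod int p)" by (simp only: cong_minus_minus_iff)
      then show ?thesis by (simp add: ac_simps)
    qed
    have "[\<delta> * (2 * TT A) = \<delta> * (- (D^(t+1)) * lucas_u A h)] (mod int p)"
      using Lh R cong_sym cong_trans by blast
    moreover have "coprime \<delta> (int p)"
    proof (rule coprime_p)
      show "\<not> int p dvd \<delta>"
      proof
        assume "int p dvd \<delta>"
        then have "int p dvd \<delta>^2" by (simp add: power2_eq_square)
        then show False using nD cong_dvd_iff[OF dd] by simp
      qed
    qed
    ultimately have "[2 * TT A = - (D^(t+1)) * lucas_u A h] (mod int p)"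
      using cong_mult_lcancel by blast
    then show "[2 * TT A = - ((A^2 + 4) ^ ((p+1) div 4)) * lucas_u A ((p-1) div 2)] (mod int p)"
      unfolding pt hp D_def .
  qed
  show ?thesis using part1 part3 by blast
qed

end


lemma lagrange_mod:
  fixes q :: int and H :: "int poly" and P :: "int set"
  assumes q: "prime q" and fin: "finite P"
    and dist: "\<forall>x\<in>P. \<forall>y\<in>P. q dvd x - y \<longrightarrow> x = y"
    and van: "\<forall>x\<in>P. q dvd poly H x" and deg: "degree H < card P"
  shows "q dvd coeff H k"
  using fin dist van deg
proof (induction P arbitrary: H k rule: finite_induct)
  case empty then show ?case by simp
next
  case (insert c P H k)
  have qc: "q dvd poly H c" using insert.prems(2) by simp
  show ?case
  proof (cases "degree H = 0")
    case True
    obtain h0 where H: "H = [:h0:]" using degree_eq_zeroE[OF True] by blast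
    then show ?thesis using qc by (cases k) auto
  next
    case False
    define G where "G = synthetic_div H c"
    have HG: "[:-c, 1:] * G + [:poly H c:] = H" unfolding G_def by (rule synthetic_div_correct')
    have dG: "degree G < card P"
      using insert.prems(3) False insert.hyps by (simp add: G_def degree_synthetic_div)
    have vG: "\<forall>x\<in>P. q dvd poly G x"
    proof
      fix x assume xP: "x \<in> P"
      have "poly H x = (x - c) * poly G x + poly H c"
        using arg_cong[OF HG, of "\<lambda>f. poly f x"] by (simp add: algebra_simps)
      moreover have "q dvd poly H x" using insert.prems(2) xP by simp
      ultimately have "q dvd (x - c) * poly G x" using qc by (metis dvd_add_left_iff)
      moreover have "\<not> q dvd x - c"
      proof
        assume "q dvd x - c"
        then have "x = c" using insert.prems(1) xP by simp
        then show False using xP insert.hyps by simp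
      qed
      ultimately show "q dvd poly G x" using q by (simp add: prime_dvd_mult_iff)
    qed
    have dP: "\<forall>x\<in>P. \<forall>y\<in>P. q dvd x - y \<longrightarrow> x = y" using insert.prems(1) by simp
    have cG: "q dvd coeff G j" for j using insert.IH[OF dP vG dG] .
    define r where "r = poly H c"
    have Heq: "H = smult (-c) G + pCons 0 G + [:r:]"
      using HG by (simp add: mult_pCons_left r_def)
    have "coeff H k = - c * coeff G k + coeff (pCons 0 G) k + coeff [:poly H c:] k"
      using arg_cong[OF Heq, of "\<lambda>f. coeff f k"] unfolding r_def[symmetric] by simp
    moreover have "q dvd coeff (pCons 0 G) k" using cG by (cases k) auto
    moreover have "q dvd coeff [:poly H c:] k" using qc by (cases k) auto
    ultimately show ?thesis using cG by simp
  qed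
qed

lemma mpoi_mult: "map_poly (of_int::int\<Rightarrow>'a::comm_ring_1) (f * g) = map_poly of_int f * map_poly of_int g"
  by (rule poly_eqI) (simp add: coeff_mult coeff_map_poly)

lemma mpoi_diff: "map_poly (of_int::int\<Rightarrow>'a::comm_ring_1) (f - g) = map_poly of_int f - map_poly of_int g"
  by (rule poly_eqI) (simp add: coeff_map_poly)

lemma mpoi_prod: "map_poly (of_int::int\<Rightarrow>'a::comm_ring_1) (\<Prod>a\<in>X. f a) = (\<Prod>a\<in>X. map_poly of_int (f a))"
proof (induction X rule: infinite_finite_induct)
  case (infinite A) then show ?case by simp
next
  case empty then show ?case by simp
next
  case (insert x F) then show ?case by (simp add: mpoi_mult)
qed

context oddp begin

definition FF :: "int poly" where "FF = (\<Prod>a\<in>{0..<p}. [:- int a, 1:])"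
definition GG :: "int poly" where "GG = monom 1 p - [:0, 1:]"

lemma FG_coeff: "int p dvd coeff (FF - GG) k"
proof (rule lagrange_mod[OF prime_int, of "int ` {0..<p}"])
  show "finite (int ` {0..<p})" by simp
  show "\<forall>x\<in>int ` {0..<p}. \<forall>y\<in>int ` {0..<p}. int p dvd x - y \<longrightarrow> x = y"
  proof (intro ballI impI)
    fix x y assume "x \<in> int ` {0..<p}" "y \<in> int ` {0..<p}" "int p dvd x - y"
    moreover have "\<bar>x - y\<bar> < int p" using calculation by auto
    ultimately show "x = y" using small_dvd by fastforce
  qed
  show "\<forall>x\<in>int ` {0..<p}. int p dvd poly (FF - GG) x"
  proof
    fix x assume x: "x \<in> int ` {0..<p}"
    obtain a where a: "a \<in> {0..<p}" "x = int a" using x by auto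
    have "poly FF x = (\<Prod>b\<in>{0..<p}. x - int b)" unfolding FF_def poly_prod by simp
    also have "\<dots> = 0" by (rule prod_zero) (use a in auto)
    finally have "poly FF x = 0" .
    moreover have "int p dvd poly GG x"
      using int_fermat[of x] by (simp add: GG_def poly_monom cong_iff_dvd_diff)
    ultimately show "int p dvd poly (FF - GG) x" by simp
  qed
  have dF: "degree FF = p" unfolding FF_def by (subst degree_prod_sum_eq) auto
  have lF: "coeff FF p = 1"
  proof -
    have "lead_coeff FF = 1" unfolding FF_def lead_coeff_prod by simp
    then show ?thesis using dF by simp
  qed
  have c01: "coeff [:0, 1:] i = 0" if i2: "i \<ge> 2" for i :: nat
  proof -
    obtain n where "i = 2 + n" using le_Suc_ex[OF i2] by blast
    then show ?thesis by simp
  qed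
  have "\<forall>i>p - 1. coeff (FF - GG) i = 0"
  proof (intro allI impI)
    fix i assume "i > p - 1"
    then have "i = p \<or> i > p" by linarith
    then show "coeff (FF - GG) i = 0"
    proof
      assume "i = p" then show ?thesis using lF p_ge3 c01[of p] by (simp add: GG_def coeff_monom)
    next
      assume "i > p" then show ?thesis using dF p_ge3 c01[of i] by (simp add: GG_def coeff_monom coeff_eq_0)
    qed
  qed
  then have "degree (FF - GG) \<le> p - 1" by (rule degree_le)
  then show "degree (FF - GG) < card (int ` {0..<p})" using p_ge3 by (simp add: card_image)
qed

end


locale extp = oddp +
  fixes A :: int and \<alpha> :: real
  assumes aeq: "\<alpha>^2 = of_int A * \<alpha> + 1"
begin

definition inR :: "real \<Rightarrow> bool" where
  "inR x \<longleftrightarrow> (\<exists>a b::int. x = of_int a + of_int b * \<alpha>)"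
definition pR :: "real \<Rightarrow> bool" where
  "pR x \<longleftrightarrow> (\<exists>r. inR r \<and> x = of_nat p * r)"
definition cgr :: "real \<Rightarrow> real \<Rightarrow> bool" where
  "cgr x y \<longleftrightarrow> pR (x - y)"

lemma inR_int [simp]: "inR (of_int a)"
  unfolding inR_def by (rule exI[of _ a], rule exI[of _ 0]) simp
lemma inR_nat [simp]: "inR (of_nat n)"
  using inR_int[of "int n"] by simp
lemma inR_0 [simp]: "inR 0" using inR_int[of 0] by simp
lemma inR_1 [simp]: "inR 1" using inR_int[of 1] by simp
lemma inR_numeral [simp]: "inR (numeral k)" using inR_int[of "numeral k"] by simp
lemma inR_alpha [simp]: "inR \<alpha>"
  unfolding inR_def by (rule exI[of _ 0], rule exI[of _ 1]) simp
lemma inR_add [simp]: "inR x \<Longrightarrow> inR y \<Longrightarrow> inR (x + y)"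
proof -
  assume "inR x" "inR y"
  then obtain a b c d where x: "x = of_int a + of_int b * \<alpha>" and y: "y = of_int c + of_int d * \<alpha>"
    unfolding inR_def by blast
  have "x + y = of_int (a + c) + of_int (b + d) * \<alpha>" unfolding x y by (simp add: algebra_simps)
  then show ?thesis unfolding inR_def by blast
qed
lemma inR_uminus [simp]: "inR x \<Longrightarrow> inR (- x)"
proof -
  assume "inR x"
  then obtain a b where x: "x = of_int a + of_int b * \<alpha>" unfolding inR_def by blast
  have "- x = of_int (- a) + of_int (- b) * \<alpha>" unfolding x by simp
  then show ?thesis unfolding inR_def by blast
qed
lemma inR_diff [simp]: "inR x \<Longrightarrow> inR y \<Longrightarrow> inR (x - y)"
  using inR_add[of x "- y"] by simp
lemma inR_mult [simp]: "inR x \<Longrightarrow> inR y \<Longrightarrow> inR (x * y)"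
proof -
  assume "inR x" "inR y"
  then obtain a b c d where x: "x = of_int a + of_int b * \<alpha>" and y: "y = of_int c + of_int d * \<alpha>"
    unfolding inR_def by blast
  have "x * y = of_int (a*c) + of_int (a*d + b*c) * \<alpha> + of_int (b*d) * \<alpha>^2"
    unfolding x y by (simp add: algebra_simps power2_eq_square)
  also have "\<dots> = of_int (a*c + b*d) + of_int (a*d + b*c + b*d*A) * \<alpha>"
    unfolding aeq by (simp add: algebra_simps)
  finally have "x * y = of_int (a*c + b*d) + of_int (a*d + b*c + b*d*A) * \<alpha>" .
  then show ?thesis unfolding inR_def by blast
qed
lemma inR_pow [simp]: "inR x \<Longrightarrow> inR (x ^ n)"
  by (induction n) simp_all
lemma inR_prod: "(\<And>i. i \<in> I \<Longrightarrow> inR (f i)) \<Longrightarrow> inR (\<Prod>i\<in>I. f i)"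
  by (induction I rule: infinite_finite_induct) auto
lemma inR_sum: "(\<And>i. i \<in> I \<Longrightarrow> inR (f i)) \<Longrightarrow> inR (\<Sum>i\<in>I. f i)"
  by (induction I rule: infinite_finite_induct) auto

lemma pR_0 [simp]: "pR 0" unfolding pR_def by (rule exI[of _ 0]) simp
lemma pR_add: "pR x \<Longrightarrow> pR y \<Longrightarrow> pR (x + y)"
proof -
  assume "pR x" "pR y"
  then obtain r s where "inR r" "x = of_nat p * r" "inR s" "y = of_nat p * s" unfolding pR_def by blast
  then show ?thesis unfolding pR_def by (intro exI[of _ "r + s"]) (simp add: algebra_simps)
qed
lemma pR_uminus: "pR x \<Longrightarrow> pR (- x)"
proof -
  assume "pR x"
  then obtain r where "inR r" "x = of_nat p * r" unfolding pR_def by blast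
  then show ?thesis unfolding pR_def by (intro exI[of _ "- r"]) simp
qed
lemma pR_diff: "pR x \<Longrightarrow> pR y \<Longrightarrow> pR (x - y)"
  using pR_add[of x "- y"] pR_uminus by simp
lemma pR_mult: "pR x \<Longrightarrow> inR y \<Longrightarrow> pR (x * y)"
proof -
  assume "pR x" "inR y"
  then obtain r where "inR r" "x = of_nat p * r" unfolding pR_def by blast
  then show ?thesis unfolding pR_def using \<open>inR y\<close> by (intro exI[of _ "r * y"]) simp
qed
lemma pR_mult2: "inR y \<Longrightarrow> pR x \<Longrightarrow> pR (y * x)"
  using pR_mult[of x y] by (simp add: mult.commute)
lemma pR_sum: "(\<And>i. i \<in> I \<Longrightarrow> pR (f i)) \<Longrightarrow> pR (\<Sum>i\<in>I. f i)"
  by (induction I rule: infinite_finite_induct) (auto intro: pR_add)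
lemma pR_int: "int p dvd c \<Longrightarrow> pR (of_int c)"
proof -
  assume "int p dvd c"
  then obtain k where "c = int p * k" by auto
  then show ?thesis unfolding pR_def by (intro exI[of _ "of_int k"]) simp
qed
lemma pR_p: "inR y \<Longrightarrow> pR (of_nat p * y)"
  unfolding pR_def by blast
lemma pR_inR: "pR x \<Longrightarrow> inR x"
  unfolding pR_def by auto

lemma cgr_refl [simp]: "cgr x x" by (simp add: cgr_def)
lemma cgr_sym: "cgr x y \<Longrightarrow> cgr y x"
  unfolding cgr_def using pR_uminus[of "x - y"] by simp
lemma cgr_trans: "cgr x y \<Longrightarrow> cgr y z \<Longrightarrow> cgr x z"
  unfolding cgr_def using pR_add[of "x - y" "y - z"] by simp
lemma cgr_add: "cgr x y \<Longrightarrow> cgr z w \<Longrightarrow> cgr (x + z) (y + w)"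
  unfolding cgr_def using pR_add[of "x - y" "z - w"] by (simp add: algebra_simps)
lemma cgr_diff: "cgr x y \<Longrightarrow> cgr z w \<Longrightarrow> cgr (x - z) (y - w)"
  unfolding cgr_def using pR_diff[of "x - y" "z - w"] by (simp add: algebra_simps)
lemma cgr_uminus: "cgr x y \<Longrightarrow> cgr (- x) (- y)"
  unfolding cgr_def using pR_uminus[of "x - y"] by (simp add: algebra_simps)
lemma cgr_mult: "cgr x y \<Longrightarrow> cgr z w \<Longrightarrow> inR y \<Longrightarrow> inR z \<Longrightarrow> cgr (x * z) (y * w)"
proof -
  assume a: "cgr x y" "cgr z w" "inR y" "inR z"
  have "x * z - y * w = (x - y) * z + y * (z - w)" by (simp add: algebra_simps)
  moreover have "pR ((x - y) * z + y * (z - w))"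
    using a unfolding cgr_def by (intro pR_add pR_mult pR_mult2)
  ultimately show ?thesis unfolding cgr_def by simp
qed
lemma cgr_lmult: "cgr x y \<Longrightarrow> inR z \<Longrightarrow> cgr (z * x) (z * y)"
  unfolding cgr_def using pR_mult2[of z "x - y"] by (simp add: algebra_simps)
lemma cgr_rmult: "cgr x y \<Longrightarrow> inR z \<Longrightarrow> cgr (x * z) (y * z)"
  unfolding cgr_def using pR_mult[of "x - y" z] by (simp add: algebra_simps)
lemma cgr_pow: "cgr x y \<Longrightarrow> inR x \<Longrightarrow> inR y \<Longrightarrow> cgr (x ^ n) (y ^ n)"
  by (induction n) (auto intro: cgr_mult)
lemma cgr_prod: "(\<And>i. i \<in> I \<Longrightarrow> cgr (f i) (g i)) \<Longrightarrow> (\<And>i. i \<in> I \<Longrightarrow> inR (f i)) \<Longrightarrow>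
    (\<And>i. i \<in> I \<Longrightarrow> inR (g i)) \<Longrightarrow> cgr (\<Prod>i\<in>I. f i) (\<Prod>i\<in>I. g i)"
proof (induction I rule: infinite_finite_induct)
  case (insert x F)
  then show ?case by (simp, intro cgr_mult inR_prod) auto
qed auto
lemma cgr_int: "[a = b] (mod int p) \<Longrightarrow> cgr (of_int a) (of_int b)"
  unfolding cgr_def using pR_int[of "a - b"] by (simp add: cong_iff_dvd_diff)

lemma extract_dvd:
  assumes nsq: "\<And>w. A^2 + 4 \<noteq> w^2" and c: "cgr (of_int c) 0"
  shows "int p dvd c"
proof -
  obtain a b where ab: "of_int c = of_nat p * (of_int a + of_int b * \<alpha>)"
    using c unfolding cgr_def pR_def inR_def by auto
  show ?thesis
  proof (cases "b = 0")
    case True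
    then have "of_int c = (of_int (int p * a) :: real)" using ab by simp
    then have "c = int p * a" by (simp only: of_int_eq_iff)
    then show ?thesis by simp
  next
    case False
    define u where "u = c - int p * a"
    define v where "v = int p * b"
    have v0: "v \<noteq> 0" using False p_ge3 by (simp add: v_def)
    have uv: "of_int u = of_int v * \<alpha>" using ab by (simp add: u_def v_def algebra_simps)
    have "(of_int u :: real)^2 = of_int v^2 * \<alpha>^2" unfolding uv by (simp add: power_mult_distrib)
    also have "\<dots> = of_int A * of_int v * (of_int v * \<alpha>) + of_int v^2" unfolding aeq
      by (simp add: algebra_simps power2_eq_square)
    finally have "(of_int (u^2) :: real) = of_int (A * v * u + v^2)" unfolding uv[symmetric] by simp
    then have uu: "u^2 = A * v * u + v^2" by (simp only: of_int_eq_iff)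
    have "(2*u - A*v)^2 = (A^2 + 4) * v^2" using uu by (simp add: power2_eq_square algebra_simps)
    then have "v^2 dvd (2*u - A*v)^2" by simp
    then have "v dvd 2*u - A*v" by (simp add: pow_divides_pow_iff)
    then obtain w where w: "2*u - A*v = v * w" by auto
    have "(v * w)^2 = (A^2 + 4) * v^2" using \<open>(2*u - A*v)^2 = (A^2 + 4) * v^2\<close> unfolding w .
    then have "v^2 * w^2 = v^2 * (A^2 + 4)" by (simp add: power_mult_distrib mult.commute)
    then have "w^2 = A^2 + 4" using v0 by simp
    then show ?thesis using nsq[of w] by simp
  qed
qed

end


context extp begin

lemma cgr_cancel:
  assumes "cgr (u * y) (u * z)" "inR y" "inR z" "inR v" "cgr (v * u) 1" "inR u"
  shows "cgr y z"
proof -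
  have "cgr (1 * y) ((v * u) * y)" by (rule cgr_rmult[OF cgr_sym[OF assms(5)] assms(2)])
  moreover have "(v * u) * y = v * (u * y)" by (simp add: ac_simps)
  moreover have "cgr (v * (u * y)) (v * (u * z))" by (rule cgr_lmult[OF assms(1) assms(4)])
  moreover have "v * (u * z) = (v * u) * z" by (simp add: ac_simps)
  moreover have "cgr ((v * u) * z) (1 * z)" by (rule cgr_rmult[OF assms(5) assms(3)])
  ultimately show ?thesis by (metis cgr_trans mult_1_left)
qed

lemma alpha_unit: "\<alpha> * (\<alpha> - of_int A) = 1"
  using aeq by (simp add: power2_eq_square algebra_simps)

lemma alpha_pow_unit: "cgr ((\<alpha> - of_int A)^n * \<alpha>^n) 1"
proof -
  have "(\<alpha> - of_int A)^n * \<alpha>^n = (\<alpha> * (\<alpha> - of_int A))^n" by (simp add: power_mult_distrib ac_simps)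
  then show ?thesis using alpha_unit by simp
qed

lemma int_unit:
  assumes "\<not> int p dvd c"
  obtains c' where "cgr (of_int c' * of_int c) 1"
proof -
  obtain c' where "[c * c' = 1] (mod int p)" using cong_solve_coprime_int[OF coprime_p[OF assms]] by blast
  then have "cgr (of_int (c * c')) (of_int 1)" by (rule cgr_int)
  then show ?thesis using that[of c'] by (simp add: mult.commute)
qed

lemma poly_ident:
  assumes x: "inR x"
  shows "cgr (\<Prod>a\<in>{0..<p}. x - of_nat a) (x^p - x)"
proof -
  define M where "M = map_poly (of_int :: int \<Rightarrow> real) (FF - GG)"
  have "poly M x = (\<Sum>i\<le>degree M. coeff M i * x ^ i)" by (rule poly_altdef)
  moreover have "pR (\<Sum>i\<le>degree M. coeff M i * x ^ i)"
  proof (rule pR_sum)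
    fix i
    have "coeff M i = of_int (coeff (FF - GG) i)" unfolding M_def by (simp add: coeff_map_poly)
    then show "pR (coeff M i * x ^ i)" using pR_int[OF FG_coeff] x by (simp add: pR_mult)
  qed
  moreover have "poly M x = (\<Prod>a\<in>{0..<p}. x - of_nat a) - (x^p - x)"
  proof -
    have "map_poly (of_int :: int \<Rightarrow> real) FF = (\<Prod>a\<in>{0..<p}. [:- of_nat a, 1:])"
      unfolding FF_def mpoi_prod by (simp add: map_poly_pCons)
    moreover have "map_poly (of_int :: int \<Rightarrow> real) GG = monom 1 p - [:0, 1:]"
      unfolding GG_def mpoi_diff by (simp add: map_poly_monom map_poly_pCons)
    ultimately show ?thesis unfolding M_def mpoi_diff by (simp add: poly_prod poly_monom)
  qed
  ultimately show ?thesis unfolding cgr_def by simp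
qed

lemma sq_prod:
  assumes jS: "j \<in> S"
  shows "cgr (\<Prod>i\<in>S. of_nat i^2 - (\<alpha> * of_nat j)^2) ((-1)^h * ((\<alpha> * of_nat j)^(p-1) - 1))"
proof -
  define x where "x = \<alpha> * of_nat j"
  have xR: "inR x" by (simp add: x_def)
  have e0: "(\<Prod>a\<in>{0..<p}. x - of_nat a) = x * (\<Prod>a\<in>{1..p-1}. x - of_nat a)"
  proof -
    have "{0..<p} = insert 0 {1..p-1}" using p_ge3 by auto
    then show ?thesis by simp
  qed
  have spl: "{1..p-1} = S \<union> {h+1..p-1}" using p_eq by auto
  have e1: "(\<Prod>a\<in>{1..p-1}. x - of_nat a) = (\<Prod>i\<in>S. x - of_nat i) * (\<Prod>a\<in>{h+1..p-1}. x - of_nat a)"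
    unfolding spl by (rule prod.union_disjoint) auto
  have e2: "(\<Prod>a\<in>{h+1..p-1}. x - of_nat a) = (\<Prod>i\<in>S. x - (of_nat p - of_nat i))"
    by (rule prod.reindex_bij_witness[of _ "\<lambda>i. p - i" "\<lambda>i. p - i"]) (use p_eq in \<open>auto simp: of_nat_diff\<close>)
  have c2: "cgr (\<Prod>i\<in>S. x - (of_nat p - of_nat i)) (\<Prod>i\<in>S. x + of_nat i)"
  proof (rule cgr_prod)
    fix i
    have "x - (of_nat p - of_nat i) - (x + of_nat i) = of_nat p * (- 1)" by simp
    then show "cgr (x - (of_nat p - of_nat i)) (x + of_nat i)" unfolding cgr_def
      using pR_p[of "-1"] by simp
  qed (use xR in auto)
  have e3: "(\<Prod>i\<in>S. x - of_nat i) * (\<Prod>i\<in>S. x + of_nat i) = (-1)^h * (\<Prod>i\<in>S. of_nat i^2 - x^2)"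
  proof -
    have "(\<Prod>i\<in>S. x - of_nat i) * (\<Prod>i\<in>S. x + of_nat i) = (\<Prod>i\<in>S. - (of_nat i^2 - x^2))"
      by (simp add: prod.distrib[symmetric] power2_eq_square algebra_simps)
    also have "\<dots> = (-1)^card S * (\<Prod>i\<in>S. of_nat i^2 - x^2)" by (rule prod_uminus)
    also have "\<dots> = (-1)^h * (\<Prod>i\<in>S. of_nat i^2 - x^2)" by simp
    finally show ?thesis .
  qed
  have inP: "inR (\<Prod>i\<in>S. x - of_nat i)" using xR by (intro inR_prod) simp
  have ca: "cgr (x * (\<Prod>a\<in>{1..p-1}. x - of_nat a)) (x * ((-1)^h * (\<Prod>i\<in>S. of_nat i^2 - x^2)))"
  proof -
    have "cgr ((\<Prod>i\<in>S. x - of_nat i) * (\<Prod>i\<in>S. x - (of_nat p - of_nat i)))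
              ((\<Prod>i\<in>S. x - of_nat i) * (\<Prod>i\<in>S. x + of_nat i))"
      by (rule cgr_lmult[OF c2 inP])
    then show ?thesis unfolding e1 e2 e3 using xR by (intro cgr_lmult) auto
  qed
  have cb: "cgr (x * (\<Prod>a\<in>{1..p-1}. x - of_nat a)) (x * (x^(p-1) - 1))"
  proof -
    have "x^p - x = x * (x^(p-1) - 1)" by (simp add: pow_p algebra_simps)
    then show ?thesis using poly_ident[OF xR] e0 by simp
  qed
  have c: "cgr (x * ((-1)^h * (\<Prod>i\<in>S. of_nat i^2 - x^2))) (x * (x^(p-1) - 1))"
    using cgr_trans[OF cgr_sym[OF ca] cb] .
  obtain j' where j': "cgr (of_int j' * of_int (int j)) 1" using int_unit[OF ndvd_S[OF jS]] by blast
  have vx: "cgr (((\<alpha> - of_int A) * of_int j') * x) 1"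
  proof -
    have e: "((\<alpha> - of_int A) * of_int j') * x = (\<alpha> * (\<alpha> - of_int A)) * (of_int j' * of_int (int j))"
      unfolding x_def by (simp add: ac_simps)
    show ?thesis unfolding e alpha_unit mult_1_left by (rule j')
  qed
  have c': "cgr ((-1)^h * (\<Prod>i\<in>S. of_nat i^2 - x^2)) (x^(p-1) - 1)"
  proof (rule cgr_cancel[OF c _ _ _ vx])
    have inQ: "inR (\<Prod>i\<in>S. of_nat i^2 - x^2)" by (intro inR_prod) (use xR in simp)
    show "inR ((-1)^h * (\<Prod>i\<in>S. of_nat i^2 - x^2))" using inQ by simp
  qed (use xR in auto)
  have "cgr ((-1)^h * ((-1)^h * (\<Prod>i\<in>S. of_nat i^2 - x^2))) ((-1)^h * (x^(p-1) - 1))"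
    by (rule cgr_lmult[OF c']) simp
  moreover have "(-1::real)^h * ((-1)^h * (\<Prod>i\<in>S. of_nat i^2 - x^2)) = (\<Prod>i\<in>S. of_nat i^2 - x^2)"
    by (simp flip: mult.assoc power_add)
  ultimately show ?thesis unfolding x_def by simp
qed

lemma frob:
  assumes x: "inR x" and y: "inR y"
  shows "cgr ((x + y)^p) (x^p + y^p)"
proof -
  define f where "f k = of_nat (p choose k) * x^k * y^(p-k)" for k
  have "(x + y)^p = (\<Sum>k\<le>p. f k)" unfolding f_def by (rule binomial_ring)
  also have "{..p} = insert 0 (insert p {1..p-1})" using p_ge3 by auto
  also have "(\<Sum>k\<in>insert 0 (insert p {1..p-1}). f k) = f 0 + (f p + (\<Sum>k\<in>{1..p-1}. f k))"
    using p_ge3 by (simp add: sum.insert)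
  finally have e: "(x + y)^p = y^p + x^p + (\<Sum>k\<in>{1..p-1}. f k)" by (simp add: f_def)
  have "pR (\<Sum>k\<in>{1..p-1}. f k)"
  proof (rule pR_sum)
    fix k assume k: "k \<in> {1..p-1}"
    have "p dvd (p choose k)" using k p_ge3 by (intro dvd_choose_prime pr) auto
    then obtain m where m: "p choose k = p * m" by auto
    have "f k = of_nat p * (of_nat m * x^k * y^(p-k))" unfolding f_def m by simp
    then show "pR (f k)" using x y by (simp add: pR_p)
  qed
  then show ?thesis unfolding cgr_def e by (simp add: add.commute)
qed

lemma frob_alpha:
  assumes Dh: "[(A^2 + 4)^h = -1] (mod int p)"
  shows "cgr (\<alpha>^p) (of_int A - \<alpha>)" "cgr (\<alpha>^(p+1)) (-1)"
proof -
  define s where "s = 2 * \<alpha> - of_int A"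
  have sR: "inR s" by (simp add: s_def)
  have s2: "s^2 = of_int (A^2 + 4)" unfolding s_def using aeq by (simp add: power2_eq_square algebra_simps)
  have "(2 * \<alpha>)^p = (of_int A + s)^p" by (simp add: s_def)
  have c1: "cgr ((of_int A + s)^p) ((of_int A)^p + s^p)" by (rule frob) (simp_all add: sR)
  have c2: "cgr ((of_int A :: real)^p) (of_int A)"
    using cgr_int[OF int_fermat[of A]] by simp
  have c3: "cgr (s^p) (- s)"
  proof -
    have pm: "p - 1 = 2 * h" using p_eq by simp
    have "s^p = s^(2*h) * s" unfolding pow_p pm ..
    also have "s^(2*h) = of_int ((A^2 + 4)^h)" by (simp add: power_mult s2)
    finally have e: "s^p = of_int ((A^2 + 4)^h) * s" .
    have "cgr (of_int ((A^2 + 4)^h) * s) (of_int (-1) * s)" by (rule cgr_rmult[OF cgr_int[OF Dh] sR])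
    then show ?thesis unfolding e by simp
  qed
  have c4: "cgr ((2 * \<alpha>)^p) (2 * (of_int A - \<alpha>))"
  proof -
    have "cgr ((2 * \<alpha>)^p) ((of_int A)^p + s^p)" using c1 by (simp add: s_def)
    moreover have "cgr ((of_int A)^p + s^p) (of_int A + - s)" by (rule cgr_add[OF c2 c3])
    moreover have "of_int A + - s = 2 * (of_int A - \<alpha>)" by (simp add: s_def)
    ultimately show ?thesis using cgr_trans by metis
  qed
  have c5: "cgr ((2 * \<alpha>)^p) (2 * \<alpha>^p)"
  proof -
    have "cgr (of_int (2^p)) (of_int 2)" by (rule cgr_int[OF int_fermat])
    then have "cgr (2^p * \<alpha>^p) (2 * \<alpha>^p)" using cgr_rmult[of "of_int (2^p)" "of_int 2" "\<alpha>^p"] by simp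
    then show ?thesis by (simp add: power_mult_distrib)
  qed
  have c6: "cgr (2 * \<alpha>^p) (2 * (of_int A - \<alpha>))" using cgr_trans[OF cgr_sym[OF c5] c4] .
  have inv2: "cgr ((of_nat h + 1) * 2) 1"
  proof -
    have "(of_nat h + 1) * 2 - 1 = (of_nat p :: real) * 1" using p_eq by simp
    then show ?thesis unfolding cgr_def using pR_p[of 1] by simp
  qed
  show ca: "cgr (\<alpha>^p) (of_int A - \<alpha>)"
    by (rule cgr_cancel[OF c6 _ _ _ inv2]) simp_all
  have "cgr (\<alpha>^p * \<alpha>) ((of_int A - \<alpha>) * \<alpha>)" by (rule cgr_rmult[OF ca]) simp
  moreover have "(of_int A - \<alpha>) * \<alpha> = -1" using alpha_unit by (simp add: algebra_simps)
  ultimately show "cgr (\<alpha>^(p+1)) (-1)" by (simp add: mult.commute)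
qed

lemma key3:
  assumes Dh: "[(A^2 + 4)^h = -1] (mod int p)"
    and nz: "\<And>i j. i \<in> S \<Longrightarrow> j \<in> S \<Longrightarrow> \<not> int p dvd Qf A i j"
  shows "cgr (\<alpha>^(h*h + h) * of_int (TT A)) ((2 * \<alpha> - of_int A)^h)"
proof -
  define s where "s = 2 * \<alpha> - of_int A"
  have NS: "NN A = S \<times> S" using nz by (auto simp: NN_def)
  have Qa: "\<alpha> * of_int (Qf A i j) = (of_nat i - \<alpha> * of_nat j) * (\<alpha> * of_nat i + of_nat j)" for i j
  proof -
    have "(of_nat i - \<alpha> * of_nat j) * (\<alpha> * of_nat i + of_nat j)
       = \<alpha> * of_nat i^2 + of_nat i * of_nat j - \<alpha>^2 * of_nat i * of_nat j - \<alpha> * of_nat j^2"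
      by (simp add: power2_eq_square algebra_simps)
    also have "\<dots> = \<alpha> * of_int (Qf A i j)" unfolding aeq Qf_def by (simp add: algebra_simps power2_eq_square)
    finally show ?thesis by simp
  qed
  have E: "\<alpha>^(h*h) * of_int (TT A) = (\<Prod>j\<in>S. \<Prod>i\<in>S. of_nat i^2 - (\<alpha> * of_nat j)^2)"
  proof -
    have "of_int (TT A) = (\<Prod>(i,j)\<in>S \<times> S. (of_int (Qf A i j) :: real))"
      unfolding TT_def NS by (simp add: case_prod_beta)
    then have "\<alpha>^(h*h) * of_int (TT A) = (\<Prod>(i,j)\<in>S \<times> S. \<alpha> * of_int (Qf A i j))"
      by (simp add: prod.distrib case_prod_beta)
    also have "\<dots> = (\<Prod>(i,j)\<in>S \<times> S. (of_nat i - \<alpha> * of_nat j) * (\<alpha> * of_nat i + of_nat j))"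
      by (simp add: Qa)
    also have "\<dots> = (\<Prod>(i,j)\<in>S \<times> S. of_nat i - \<alpha> * of_nat j) * (\<Prod>(i,j)\<in>S \<times> S. \<alpha> * of_nat i + of_nat j)"
      by (rule prod_pair_distrib)
    also have "(\<Prod>(i,j)\<in>S \<times> S. \<alpha> * of_nat i + of_nat j) = (\<Prod>(i,j)\<in>S \<times> S. of_nat i + \<alpha> * of_nat j)"
      by (rule prod.reindex_bij_witness[of _ "\<lambda>(i,j). (j,i)" "\<lambda>(i,j). (j,i)"]) auto
    also have "(\<Prod>(i,j)\<in>S \<times> S. of_nat i - \<alpha> * of_nat j) * \<dots> = (\<Prod>(i,j)\<in>S \<times> S. (of_nat i - \<alpha> * of_nat j) * (of_nat i + \<alpha> * of_nat j))"
      by (rule prod_pair_distrib[symmetric])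
    also have "\<dots> = (\<Prod>(i,j)\<in>S \<times> S. of_nat i^2 - (\<alpha> * of_nat j)^2)"
      by (simp add: power2_eq_square algebra_simps)
    also have "\<dots> = (\<Prod>i\<in>S. \<Prod>j\<in>S. of_nat i^2 - (\<alpha> * of_nat j)^2)"
      by (simp add: prod.cartesian_product)
    also have "\<dots> = (\<Prod>j\<in>S. \<Prod>i\<in>S. of_nat i^2 - (\<alpha> * of_nat j)^2)" by (rule prod.swap)
    finally show ?thesis .
  qed
  define c where "c = (-1)^h * (\<alpha>^(p-1) - 1)"
  have inc: "inR c" by (simp add: c_def)
  have C1: "cgr (\<Prod>j\<in>S. \<Prod>i\<in>S. of_nat i^2 - (\<alpha> * of_nat j)^2) (\<Prod>j\<in>S. c)"
  proof (rule cgr_prod)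
    fix j assume jS: "j \<in> S"
    have "cgr ((\<alpha> * of_nat j)^(p-1)) (\<alpha>^(p-1))"
    proof -
      have "cgr (of_int (int j ^ (p-1))) (of_int 1)" by (rule cgr_int[OF int_fermat1[OF ndvd_S[OF jS]]])
      then have "cgr (\<alpha>^(p-1) * of_nat j ^ (p-1)) (\<alpha>^(p-1) * 1)"
        by (intro cgr_lmult) simp_all
      then show ?thesis by (simp add: power_mult_distrib)
    qed
    then have "cgr ((-1)^h * ((\<alpha> * of_nat j)^(p-1) - 1)) c"
      unfolding c_def by (intro cgr_lmult cgr_diff) simp_all
    then show "cgr (\<Prod>i\<in>S. of_nat i^2 - (\<alpha> * of_nat j)^2) c"
      using sq_prod[OF jS] cgr_trans by blast
  qed (auto intro!: inR_prod simp: inc)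
  have C2: "cgr (c * \<alpha>^2) ((-1)^h * (- 1 - \<alpha>^2))"
  proof -
    have "c * \<alpha>^2 = (-1)^h * (\<alpha>^(p+1) - \<alpha>^2)"
    proof -
      have "\<alpha>^(p-1) * \<alpha>^2 = \<alpha>^(p+1)" using p_ge3 by (simp flip: power_add)
      then show ?thesis unfolding c_def by (simp add: algebra_simps)
    qed
    moreover have "cgr ((-1)^h * (\<alpha>^(p+1) - \<alpha>^2)) ((-1)^h * (- 1 - \<alpha>^2))"
      by (intro cgr_lmult cgr_diff frob_alpha(2)[OF Dh]) simp_all
    ultimately show ?thesis by simp
  qed
  have as: "- 1 - \<alpha>^2 = - (\<alpha> * s)" unfolding s_def using aeq by (simp add: algebra_simps power2_eq_square)
  have C3: "cgr ((c * \<alpha>^2)^h) (\<alpha>^h * s^h)"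
  proof -
    have "cgr ((c * \<alpha>^2)^h) (((-1)^h * (- 1 - \<alpha>^2))^h)" by (rule cgr_pow[OF C2]) (simp_all add: inc)
    moreover have "((-1)^h * (- 1 - \<alpha>^2))^h = \<alpha>^h * s^h"
    proof -
      have e: "(-1::real)^h * (- (\<alpha> * s)) = (-1)^(h+1) * (\<alpha> * s)" by simp
      have "((-1::real)^h * (- 1 - \<alpha>^2))^h = ((-1)^(h+1) * (\<alpha> * s))^h" unfolding as e ..
      also have "\<dots> = ((-1)^(h+1))^h * (\<alpha> * s)^h" by (rule power_mult_distrib)
      also have "((-1::real)^(h+1))^h = 1"
      proof -
        have ev: "even ((h+1)*h)" by simp
        have "((-1::real)^(h+1))^h = (-1)^((h+1)*h)" by (simp only: power_mult)
        also have "\<dots> = 1" using ev by (rule neg_one_even_power)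
        finally show ?thesis .
      qed
      finally show ?thesis by (simp add: power_mult_distrib)
    qed
    ultimately show ?thesis by simp
  qed
  have "cgr (\<alpha>^(h*h) * of_int (TT A) * \<alpha>^(2*h)) (\<alpha>^h * s^h)"
  proof -
    have "cgr (\<alpha>^(h*h) * of_int (TT A)) (c^h)" using C1 unfolding E by simp
    then have "cgr (\<alpha>^(h*h) * of_int (TT A) * (\<alpha>^2)^h) (c^h * (\<alpha>^2)^h)" by (rule cgr_rmult) simp
    then show ?thesis using C3 cgr_trans by (simp add: power_mult power_mult_distrib)
  qed
  moreover have "\<alpha>^(h*h) * of_int (TT A) * \<alpha>^(2*h) = \<alpha>^h * (\<alpha>^(h*h + h) * of_int (TT A))"
  proof -
    have p1: "\<alpha>^(2*h) = \<alpha>^h * \<alpha>^h" unfolding mult_2 by (rule power_add)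
    have p2: "\<alpha>^(h*h+h) = \<alpha>^(h*h) * \<alpha>^h" by (rule power_add)
    show ?thesis unfolding p1 p2 by (simp only: ac_simps)
  qed
  ultimately have "cgr (\<alpha>^h * (\<alpha>^(h*h + h) * of_int (TT A))) (\<alpha>^h * s^h)" by simp
  then show ?thesis unfolding s_def[symmetric]
    by (rule cgr_cancel[OF _ _ _ _ alpha_pow_unit]) (simp_all add: s_def)
qed

end


context extp begin

lemma binet_real:
  "(2 * \<alpha> - of_int A) * of_int (lucas_u A n) = \<alpha>^n - (of_int A - \<alpha>)^n"
proof -
  define F where "F n = (2 * \<alpha> - of_int A) * of_int (lucas_u A n) - (\<alpha>^n - (of_int A - \<alpha>)^n)" for n
  have step: "F (Suc (Suc n)) = of_int A * F (Suc n) + F n - (\<alpha>^n - (of_int A - \<alpha>)^n) * (\<alpha>^2 - of_int A*\<alpha> - 1)" for n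
    unfolding F_def by (simp add: power2_eq_square algebra_simps)
  have z: "\<alpha>^2 - of_int A*\<alpha> - 1 = 0" using aeq by simp
  have "F n = 0 \<and> F (Suc n) = 0"
  proof (induction n)
    case 0 then show ?case by (simp add: F_def)
  next
    case (Suc n)
    then have "F (Suc (Suc n)) = 0" using step[of n] z by simp
    then show ?case using Suc by simp
  qed
  then show ?thesis by (simp add: F_def)
qed

end

context oddp begin

lemma Legendre_m1:
  assumes "Legendre D (int p) = -1"
  shows "\<not> int p dvd D" "\<not> QuadRes (int p) D" "[D^h = -1] (mod int p)"
proof -
  show "\<not> int p dvd D" using assms by (auto simp: Legendre_def cong_0_iff split: if_splits)
  show "\<not> QuadRes (int p) D" using assms by (auto simp: Legendre_def split: if_splits)
  have "[Legendre D (int p) = D ^ ((p - 1) div 2)] (mod int p)" using euler_criterion[OF pr] p_ge3 by simp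
  then show "[D^h = -1] (mod int p)" using assms by (simp add: h_def cong_sym)
qed

lemma neg_pow: "(- (A^2) - 4) ^ n = (-1)^n * (A^2+4)^n" for A :: int
proof -
  have "- (A^2) - 4 = (-1) * (A^2 + 4)" by simp
  then have "(- (A^2) - 4) ^ n = ((-1) * (A^2 + 4)) ^ n" by (simp only:)
  also have "\<dots> = (-1)^n * (A^2+4)^n" by (rule power_mult_distrib)
  finally show ?thesis .
qed

lemma case_iii:
  assumes L: "Legendre (A^2 + 4) (int p) = -1"
  shows "(p mod 4 = 1 \<longrightarrow> [TT A = (- (A^2) - 4) ^ ((p-1) div 4)] (mod int p)) \<and>
         (p mod 4 = 3 \<longrightarrow> [2 * TT A = (- (A^2) - 4) ^ ((p+1) div 4) * lucas_u A ((p+1) div 2)] (mod int p))"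
proof -
  define D where "D = A^2 + 4"
  have nQ: "\<not> QuadRes (int p) D" and Dh: "[D^h = -1] (mod int p)"
    using Legendre_m1[OF L] by (auto simp: D_def)
  have nsq: "A^2 + 4 \<noteq> w^2" for w
  proof
    assume "A^2 + 4 = w^2"
    then have "QuadRes (int p) D" unfolding QuadRes_def D_def by (intro exI[of _ w]) simp
    then show False using nQ by simp
  qed
  have nz: "\<not> int p dvd Qf A i j" if iS: "i \<in> S" and jS: "j \<in> S" for i j
  proof
    assume d: "int p dvd Qf A i j"
    obtain j' where j': "[int j * j' = 1] (mod int p)"
      using cong_solve_coprime_int[OF coprime_p[OF ndvd_S[OF jS]]] by blast
    define z where "z = j' * (2 * int i - A * int j)"
    have e: "z^2 - D = j'^2 * (4 * Qf A i j) + D * ((int j * j')^2 - 1)"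
      unfolding z_def Qf_def D_def by (simp add: power2_eq_square algebra_simps)
    have "int p dvd j'^2 * (4 * Qf A i j) + D * ((int j * j')^2 - 1)"
    proof (rule dvd_add)
      show "int p dvd j'^2 * (4 * Qf A i j)" using d by simp
      have "[(int j * j')^2 = 1^2] (mod int p)" by (rule cong_pow[OF j'])
      then have "int p dvd (int j * j')^2 - 1" by (simp add: cong_iff_dvd_diff)
      then show "int p dvd D * ((int j * j')^2 - 1)" by simp
    qed
    then have "[z^2 = D] (mod int p)" unfolding cong_iff_dvd_diff e .
    then have "QuadRes (int p) D" unfolding QuadRes_def by blast
    then show False using nQ by simp
  qed
  define \<alpha> where "\<alpha> = (of_int A + sqrt (of_int D)) / (2::real)"
  have sD: "sqrt (of_int D) ^ 2 = (of_int D :: real)" unfolding D_def by simp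
  have aeq: "\<alpha>^2 = of_int A * \<alpha> + 1"
  proof -
    have "4 * \<alpha>^2 = (of_int A)^2 + 2 * of_int A * sqrt (of_int D) + sqrt (of_int D)^2"
      unfolding \<alpha>_def by (simp add: power2_eq_square algebra_simps)
    also have "\<dots> = 4 * (of_int A * \<alpha> + 1)" unfolding sD \<alpha>_def D_def by (simp add: algebra_simps power2_eq_square)
    finally show ?thesis by simp
  qed
  interpret E: extp p A \<alpha> by unfold_locales (rule aeq)
  have s_eq: "2 * \<alpha> - of_int A = sqrt (of_int D)" unfolding \<alpha>_def by (simp add: field_simps)
  have K: "E.cgr (\<alpha>^(h*h + h) * of_int (TT A)) (sqrt (of_int D) ^ h)"
    using E.key3[OF Dh[unfolded D_def] nz] unfolding s_eq by simp
  have Fr: "E.cgr (\<alpha>^(p+1)) (-1)" using E.frob_alpha(2)[OF Dh[unfolded D_def]] .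
  have part1: "p mod 4 = 1 \<longrightarrow> [TT A = (- (A^2) - 4) ^ ((p-1) div 4)] (mod int p)"
  proof
    assume "p mod 4 = 1"
    then have "even h" using p_eq by presburger
    then obtain t where ht: "h = 2 * t" by (auto elim: evenE)
    have pt: "(p - 1) div 4 = t" using p_eq ht by simp
    have ap: "\<alpha>^(h*h + h) = (\<alpha>^(p+1))^t"
    proof -
      have e: "h*h + h = (p+1) * t" using p_eq ht by (simp add: algebra_simps)
      show ?thesis unfolding e by (rule power_mult)
    qed
    have "E.cgr ((\<alpha>^(p+1))^t) ((-1)^t)" by (rule E.cgr_pow[OF Fr]) simp_all
    then have "E.cgr ((\<alpha>^(p+1))^t * of_int (TT A)) ((-1)^t * of_int (TT A))" by (rule E.cgr_rmult) simp
    then have c1: "E.cgr ((-1)^t * of_int (TT A)) (sqrt (of_int D) ^ h)"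
      using K unfolding ap using E.cgr_sym E.cgr_trans by blast
    have sh: "sqrt (of_int D) ^ h = (of_int (D^t) :: real)" unfolding ht power_mult sD by simp
    have "E.cgr ((-1)^t * ((-1)^t * of_int (TT A))) ((-1)^t * of_int (D^t))"
      using E.cgr_lmult[OF c1[unfolded sh], of "(-1)^t"] by simp
    moreover have "(-1::real)^t * ((-1)^t * of_int (TT A)) = of_int (TT A)"
      by (simp flip: mult.assoc power_add)
    ultimately have "E.cgr (of_int (TT A)) (of_int ((-1)^t * D^t))" by simp
    then have "E.cgr (of_int (TT A - (-1)^t * D^t)) 0" unfolding E.cgr_def by simp
    then have "int p dvd TT A - (-1)^t * D^t" by (rule E.extract_dvd[OF nsq])
    moreover have "(- (A^2) - 4) ^ ((p-1) div 4) = (-1)^t * D^t" unfolding pt D_def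
      by (simp add: power_mult_distrib[symmetric])
    ultimately show "[TT A = (- (A^2) - 4) ^ ((p-1) div 4)] (mod int p)" by (simp add: cong_iff_dvd_diff)
  qed
  have part3: "p mod 4 = 3 \<longrightarrow> [2 * TT A = (- (A^2) - 4) ^ ((p+1) div 4) * lucas_u A ((p+1) div 2)] (mod int p)"
  proof
    assume "p mod 4 = 3"
    then have "odd h" using p_eq by presburger
    then obtain t where ht: "h = 2 * t + 1" by (auto elim: oddE)
    define m where "m = h + 1"
    have mt: "m = 2 * (t + 1)" using ht by (simp add: m_def)
    have pt1: "(p + 1) div 4 = t + 1" using p_eq ht by simp
    have pt2: "(p + 1) div 2 = m" using p_eq by (simp add: m_def)
    define s :: real where "s = sqrt (of_int D)"
    define \<gamma> where "\<gamma> = \<alpha>^m"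
    define u where "u = (of_int (lucas_u A m) :: real)"
    have g2: "E.cgr (\<gamma>^2) (-1)"
    proof -
      have e: "m * 2 = p + 1" using p_eq by (simp add: m_def)
      have "\<gamma>^2 = \<alpha>^(m*2)" unfolding \<gamma>_def by (rule power_mult[symmetric])
      then have "\<gamma>^2 = \<alpha>^(p+1)" unfolding e .
      then show ?thesis using Fr by simp
    qed
    have gR: "E.inR \<gamma>" by (simp add: \<gamma>_def)
    have K': "E.cgr (\<gamma>^h * of_int (TT A)) (s^h)"
    proof -
      have e: "h*h + h = m * h" by (simp add: m_def algebra_simps)
      have "\<alpha>^(h*h + h) = \<gamma>^h" unfolding \<gamma>_def e by (rule power_mult)
      then show ?thesis using K by (simp add: s_def)
    qed
    have sR: "E.inR s" using s_eq[symmetric] by (simp add: s_def)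
    have bin: "s * u = \<alpha>^m - (of_int A - \<alpha>)^m"
      using E.binet_real[of m] unfolding s_eq by (simp add: s_def u_def)
    have gb: "\<gamma> * (of_int A - \<alpha>)^m = 1"
    proof -
      have "\<alpha> * (of_int A - \<alpha>) = -1" using E.alpha_unit by (simp add: algebra_simps)
      then have "(\<alpha> * (of_int A - \<alpha>))^m = 1" using mt by (simp add: power_mult)
      then show ?thesis unfolding \<gamma>_def by (simp add: power_mult_distrib)
    qed
    have sug: "s * u * \<gamma> = \<gamma>^2 - 1"
    proof -
      have "s * u * \<gamma> = \<gamma> * \<gamma> - \<gamma> * (of_int A - \<alpha>)^m" unfolding bin \<gamma>_def by (simp add: algebra_simps)
      then show ?thesis using gb by (simp add: power2_eq_square)
    qed
    have c_sug: "E.cgr (s * u * \<gamma>) (-2)"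
    proof -
      have "E.cgr (\<gamma>^2 - 1) (-1 - 1)" by (rule E.cgr_diff[OF g2 E.cgr_refl])
      then show ?thesis unfolding sug by simp
    qed
    have L1: "E.cgr (\<gamma>^(h+2) * of_int (2 * TT A)) (-2 * s^h)"
    proof -
      have e: "\<gamma>^(h+2) * of_int (2 * TT A) = 2 * (\<gamma>^2 * (\<gamma>^h * of_int (TT A)))"
        by (simp only: power_add of_int_mult ac_simps of_int_numeral)
      have "E.cgr (\<gamma>^2 * (\<gamma>^h * of_int (TT A))) (-1 * s^h)"
        by (rule E.cgr_mult[OF g2 K']) (simp_all add: gR)
      then have "E.cgr (2 * (\<gamma>^2 * (\<gamma>^h * of_int (TT A)))) (2 * (-1 * s^h))"
        by (rule E.cgr_lmult) simp
      then show ?thesis unfolding e by simp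
    qed
    have R1: "E.cgr (\<gamma>^(h+2) * of_int ((- (A^2) - 4) ^ (t+1) * lucas_u A m)) (-2 * s^h)"
    proof -
      have Ds: "(of_int ((- (A^2) - 4) ^ (t+1)) :: real) = (-1)^(t+1) * s^m"
      proof -
        have "(- (A^2) - 4) ^ (t+1) = (-1)^(t+1) * D^(t+1)" unfolding D_def by (rule neg_pow)
        moreover have "s^m = of_int D ^ (t+1)" unfolding mt power_mult s_def sD ..
        ultimately show ?thesis by simp
      qed
      have e: "\<gamma>^(h+2) * of_int ((- (A^2) - 4) ^ (t+1) * lucas_u A m)
             = (-1)^(t+1) * s^h * (s * u * \<gamma>) * (\<gamma>^2)^(t+1)"
      proof -
        have g: "\<gamma>^(h+2) = \<gamma> * (\<gamma>^2)^(t+1)" using ht by (simp flip: power_mult power_Suc)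
        have sm: "s^m = s^h * s" by (simp add: m_def)
        show ?thesis unfolding g of_int_mult Ds sm u_def[symmetric] by (simp add: ac_simps)
      qed
      have c1: "E.cgr ((\<gamma>^2)^(t+1)) ((-1)^(t+1))" by (rule E.cgr_pow[OF g2]) (simp_all add: gR)
      have c: "E.cgr ((-1)^(t+1) * s^h * (s * u * \<gamma>) * (\<gamma>^2)^(t+1)) ((-1)^(t+1) * s^h * (-2) * (-1)^(t+1))"
        by (intro E.cgr_mult E.cgr_lmult c_sug c1 E.cgr_refl) (simp_all add: sR gR u_def)
      have eq2: "(-1::real)^(t+1) * s^h * (-2) * (-1)^(t+1) = -2 * s^h"
      proof -
        have "(-1::real)^(t+1) * (-1)^(t+1) = 1" by (simp flip: power_add)
        then show ?thesis by (simp add: ac_simps)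
      qed
      from c show ?thesis unfolding e eq2 .
    qed
    have cc1: "E.cgr (\<gamma>^(h+2) * of_int (2 * TT A)) (\<gamma>^(h+2) * of_int ((- (A^2) - 4) ^ (t+1) * lucas_u A m))"
      using E.cgr_trans[OF L1 E.cgr_sym[OF R1]] .
    have cc2: "E.cgr ((\<alpha> - of_int A)^(m*(h+2)) * \<gamma>^(h+2)) 1"
    proof -
      have "\<gamma>^(h+2) = \<alpha>^(m*(h+2))" unfolding \<gamma>_def by (rule power_mult[symmetric])
      then show ?thesis using E.alpha_pow_unit[of "m*(h+2)"] by (simp only:)
    qed
    have "E.cgr (of_int (2 * TT A)) (of_int ((- (A^2) - 4) ^ (t+1) * lucas_u A m))"
      by (rule E.cgr_cancel[OF cc1 _ _ _ cc2]) (simp_all add: gR)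
    then have "E.cgr (of_int (2 * TT A - (- (A^2) - 4) ^ (t+1) * lucas_u A m)) 0"
      unfolding E.cgr_def by simp
    then have "int p dvd 2 * TT A - (- (A^2) - 4) ^ (t+1) * lucas_u A m" by (rule E.extract_dvd[OF nsq])
    then show "[2 * TT A = (- (A^2) - 4) ^ ((p+1) div 4) * lucas_u A ((p+1) div 2)] (mod int p)"
      unfolding pt1 pt2 by (simp add: cong_iff_dvd_diff)
  qed
  show ?thesis using part1 part3 by blast
qed

end


theorem theorem1p4:
  fixes p :: nat and A :: int
  assumes "prime p" and "odd p"
  shows "(int p dvd A^2 + 4 \<longrightarrow>
           p mod 4 = 1 \<and>
           (\<exists>k::nat\<in>{0,1}.
              [A = 2 * (-1)^k * fact ((p-1) div 2)] (mod int p) \<and>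
              (p mod 8 = 1 \<longrightarrow>
                 [T p 1 (-A) (-1) = (-1)^((p+7) div 8) * fact ((p-1) div 2)] (mod int p)) \<and>
              (p mod 8 = 5 \<longrightarrow>
                 [T p 1 (-A) (-1) = (-1)^(k + (p-5) div 8)] (mod int p))))
       \<and> (Legendre (A^2 + 4) (int p) = 1 \<longrightarrow>
           (p mod 4 = 1 \<longrightarrow>
              [T p 1 (-A) (-1) = - ((A^2 + 4) ^ ((p-1) div 4))] (mod int p)) \<and>
           (p mod 4 = 3 \<longrightarrow>
              [2 * T p 1 (-A) (-1) = - ((A^2 + 4) ^ ((p+1) div 4)) * lucas_u A ((p-1) div 2)] (mod int p)))
       \<and> (Legendre (A^2 + 4) (int p) = -1 \<longrightarrow>
           (p mod 4 = 1 \<longrightarrow>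
              [T p 1 (-A) (-1) = (- (A^2) - 4) ^ ((p-1) div 4)] (mod int p)) \<and>
           (p mod 4 = 3 \<longrightarrow>
              [2 * T p 1 (-A) (-1) = (- (A^2) - 4) ^ ((p+1) div 4) * lucas_u A ((p+1) div 2)] (mod int p)))"
proof -
  interpret oddp p by unfold_locales (use assms in auto)
  have hh: "(p-1) div 2 = h" by (simp add: h_def)
  have TE: "T p 1 (-A) (-1) = TT A" by (rule T_eq)
  show ?thesis unfolding TE using case_i[of A, folded hh] case_ii[of A] case_iii[of A] by blast
qed


end
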